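(* Let $U\subset\mathbb{R}^4$ be a contractible, oriented, relatively compact nonempty open set and $V\subset\mathbb{R}^{n_s}$ an oriented open set. Let $\mathcal{G}$ be a Riemannian metric on $V$ and $\mathcal{J}$ a taming map on $V$. Let $(f,\mathfrak{A})\in\mathrm{Diff}(V)\times\mathrm{Sp}(2n_v,\mathbb{R})$ and set $\mathcal{J}^f_{\mathfrak{A}}=\mathfrak{A}(\mathcal{J}\circ f^{-1})\mathfrak{A}^{-1}$. Then for every $(g,\phi,\mathcal{V})\in\mathrm{Conf}_U(\mathcal{G},\mathcal{J})$, putting $(\hat g,\hat\phi,\hat{\mathcal{V}})=(g,f\circ\phi,\mathfrak{A}\mathcal{V})$, we have $$\mathcal{T}(f_\ast\mathcal{G},\mathcal{J}^f_{\mathfrak{A}})(\hat g,\hat\phi,\hat{\mathcal{V}})=\mathcal{T}(\mathcal{G},\mathcal{J})(g,\phi,\mathcal{V}),$$ where $f_\ast\mathcal{G}$ is the push-forward of $\mathcal{G}$ by $f$.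
   Context: $\mathrm{Diff}(V)$ is the group of orientation-preserving diffeomorphisms of $V$. The standard symplectic form $\omega$ on $\mathbb{R}^{2n_v}$ has matrix $\begin{pmatrix}0&-\mathrm{Id}\\ \mathrm{Id}&0\end{pmatrix}$ in the canonical basis, and $\mathrm{Sp}(2n_v,\mathbb{R})$ is its stabilizer in $\mathrm{Aut}(\mathbb{R}^{2n_v})$. A taming map on $V$ is a smooth $\mathcal{J}\colon V\to\mathrm{Aut}(\mathbb{R}^{2n_v})$ with values complex structures $J$ satisfying $\omega(J\cdot,J\cdot)=\omega$ and $\omega(\xi,J\xi)>0$ for $\xi\ne0$. Every taming map is uniquely of the form $\begin{pmatrix}-\mathcal{I}^{-1}\mathcal{R} & \mathcal{I}^{-1}\\ -\mathcal{I}-\mathcal{R}\mathcal{I}^{-1}\mathcal{R} & \mathcal{R}\mathcal{I}^{-1}\end{pmatrix}$ for smooth $\mathcal{R},\mathcal{I}\colon V\to\mathrm{Sym}(n_v,\mathbb{R})$, $\mathcal{I}$ pointwise positive definite; write $(\mathcal{R},\mathcal{I})=\gamma^{-1}(\mathcal{J})$. The configuration space $\mathrm{Conf}_U(\mathcal{G},\mathcal{J})$ is the set of triples $(g,\phi,\mathcal{V})$ with $g$ a Lorentzian metric on $U$, $\phi\in C^\infty(U,V)$ and $\mathcal{V}\in\Omega^2(U,\mathbb{R}^{2n_v})$ satisfying $\ast_g\mathcal{V}=-(\mathcal{J}\circ\phi)\mathcal{V}$ ($\ast_g$ the Hodge star of $g$ and the orientation of $U$). Writing $\mathcal{V}=(F,G)^t$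 with $F=(F^\Lambda)\in\Omega^2(U,\mathbb{R}^{n_v})$, the energy momentum tensor is the symmetric tensor with components (indices raised with $g$, $x^a$ coordinates on $U$) $$\mathcal{T}(\mathcal{G},\mathcal{J})(g,\phi,\mathcal{V})_{ab}=\mathcal{G}_{ij}(\phi)\partial_a\phi^i\partial_b\phi^j-\tfrac12g_{ab}\mathcal{G}_{ij}(\phi)\partial_c\phi^i\partial^c\phi^j+2\mathcal{I}_{\Lambda\Sigma}(\phi)F^\Lambda_{ac}F^{\Sigma\,c}_{b}-\tfrac12g_{ab}\mathcal{I}_{\Lambda\Sigma}(\phi)F^\Lambda_{cd}F^{\Sigma\,cd},$$ where $\mathcal{G}(\phi)=\mathcal{G}\circ\phi$, $\mathcal{I}(\phi)=\mathcal{I}\circ\phi$ with $(\mathcal{R},\mathcal{I})=\gamma^{-1}(\mathcal{J})$. *)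

theory Defs
  imports "HOL-Analysis.Analysis"
begin

fun Ck_on :: "nat \<Rightarrow> 'a::euclidean_space set \<Rightarrow> ('a \<Rightarrow> 'b::euclidean_space) \<Rightarrow> bool" where
  "Ck_on 0 S f = continuous_on S f"
| "Ck_on (Suc k) S f = (f differentiable_on S \<and>
      (\<forall>i\<in>Basis. Ck_on k S (\<lambda>x. frechet_derivative f (at x) i)))"

definition smooth_on :: "'a::euclidean_space set \<Rightarrow> ('a \<Rightarrow> 'b::euclidean_space) \<Rightarrow> bool" where
  "smooth_on S f \<longleftrightarrow> (\<forall>k. Ck_on k S f)"

(* an orientation of an open set of R^n, relative to the standard one:
   a locally constant sign function *)
definition orientation_on :: "'a::euclidean_space set \<Rightarrow> ('a \<Rightarrow> real) \<Rightarrow> bool" where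
  "orientation_on S ori \<longleftrightarrow> (\<forall>x\<in>S. ori x = 1 \<or> ori x = -1) \<and> continuous_on S ori"

definition orient_diffeo :: "(real^'s::finite) set \<Rightarrow> (real^'s \<Rightarrow> real) \<Rightarrow> (real^'s \<Rightarrow> real^'s) \<Rightarrow> bool" where
  "orient_diffeo V oV f \<longleftrightarrow> bij_betw f V V \<and> smooth_on V f \<and> smooth_on V (inv_into V f) \<and>
     (\<forall>x\<in>V. oV (f x) * oV x * det (matrix (frechet_derivative f (at x))) > 0)"

definition pos_def_mat :: "real^'n^'n \<Rightarrow> bool" where
  "pos_def_mat M \<longleftrightarrow> (\<forall>x. x \<noteq> 0 \<longrightarrow> x \<bullet> (M *v x) > 0)"

definition riemannian_on :: "(real^'s::finite) set \<Rightarrow> (real^'s \<Rightarrow> real^'s^'s) \<Rightarrow> bool" where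
  "riemannian_on V G \<longleftrightarrow> smooth_on V G \<and> (\<forall>y\<in>V. transpose (G y) = G y \<and> pos_def_mat (G y))"

(* standard symplectic matrix on R^{2n}, indices Inl = first n, Inr = last n *)
definition symp_mat :: "real^('v::finite + 'v)^('v + 'v)" where
  "symp_mat = (\<chi> i j. case (i, j) of
      (Inl a, Inr b) \<Rightarrow> (if a = b then -1 else 0)
    | (Inr a, Inl b) \<Rightarrow> (if a = b then 1 else 0)
    | _ \<Rightarrow> 0)"

definition symp_form :: "real^('v::finite + 'v) \<Rightarrow> real^('v + 'v) \<Rightarrow> real" where
  "symp_form \<xi> \<eta> = \<xi> \<bullet> (symp_mat *v \<eta>)"

definition Sp :: "(real^('v::finite + 'v)^('v + 'v)) set" where
  "Sp = {A. invertible A \<and> (\<forall>\<xi> \<eta>. symp_form (A *v \<xi>) (A *v \<eta>) = symp_form \<xi> \<eta>)}"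

definition tame_cs :: "real^('v::finite + 'v)^('v + 'v) \<Rightarrow> bool" where
  "tame_cs Jm \<longleftrightarrow> invertible Jm \<and> Jm ** Jm = - mat 1 \<and>
     (\<forall>\<xi> \<eta>. symp_form (Jm *v \<xi>) (Jm *v \<eta>) = symp_form \<xi> \<eta>) \<and>
     (\<forall>\<xi>. \<xi> \<noteq> 0 \<longrightarrow> symp_form \<xi> (Jm *v \<xi>) > 0)"

definition taming_map :: "(real^'s::finite) set \<Rightarrow> (real^'s \<Rightarrow> real^('v::finite + 'v)^('v + 'v)) \<Rightarrow> bool" where
  "taming_map V J \<longleftrightarrow> smooth_on V J \<and> (\<forall>y\<in>V. tame_cs (J y))"

definition gamma_mat :: "real^'v::finite^'v \<Rightarrow> real^'v^'v \<Rightarrow> real^('v + 'v)^('v + 'v)" where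
  "gamma_mat R I = (let Ii = matrix_inv I in (\<chi> i j. case i of
      Inl a \<Rightarrow> (case j of Inl b \<Rightarrow> (- (Ii ** R)) $ a $ b | Inr b \<Rightarrow> Ii $ a $ b)
    | Inr a \<Rightarrow> (case j of Inl b \<Rightarrow> (- I - R ** Ii ** R) $ a $ b | Inr b \<Rightarrow> (R ** Ii) $ a $ b)))"

definition gamma_inv :: "real^('v::finite + 'v)^('v + 'v) \<Rightarrow> (real^'v^'v) \<times> (real^'v^'v)" where
  "gamma_inv Jm = (THE p. case p of (R, I) \<Rightarrow>
      transpose R = R \<and> transpose I = I \<and> pos_def_mat I \<and> gamma_mat R I = Jm)"

definition minkowski :: "real^4^4" where
  "minkowski = (\<chi> i j. if i = j then (if i = 1 then -1 else 1) else 0)"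

definition lorentzian_on :: "(real^4) set \<Rightarrow> (real^4 \<Rightarrow> real^4^4) \<Rightarrow> bool" where
  "lorentzian_on U g \<longleftrightarrow> smooth_on U g \<and>
     (\<forall>x\<in>U. transpose (g x) = g x \<and>
        (\<exists>P. invertible P \<and> transpose P ** g x ** P = minkowski))"

definition levi :: "4 \<Rightarrow> 4 \<Rightarrow> 4 \<Rightarrow> 4 \<Rightarrow> real" where
  "levi a b c d = det (vector [axis a 1, axis b 1, axis c 1, axis d 1] :: real^4^4)"

(* Hodge star of a 2-form (antisymmetric component matrix F_ab) at a point,
   metric matrix gm, orientation sign s *)
definition hodge :: "real^4^4 \<Rightarrow> real \<Rightarrow> real^4^4 \<Rightarrow> real^4^4" where
  "hodge gm s F = (let gi = matrix_inv gm in
     (\<chi> a b. s * sqrt \<bar>det gm\<bar> / 2 *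
        (\<Sum>c\<in>UNIV. \<Sum>d\<in>UNIV. levi a b c d *
          (\<Sum>e\<in>UNIV. \<Sum>f\<in>UNIV. gi $ c $ e * gi $ d $ f * F $ e $ f))))"

definition Conf :: "(real^4) set \<Rightarrow> (real^4 \<Rightarrow> real) \<Rightarrow> (real^'s::finite) set \<Rightarrow>
    (real^'s \<Rightarrow> real^'s^'s) \<Rightarrow> (real^'s \<Rightarrow> real^('v::finite + 'v)^('v + 'v)) \<Rightarrow>
    ((real^4 \<Rightarrow> real^4^4) \<times> (real^4 \<Rightarrow> real^'s) \<times> (real^4 \<Rightarrow> real^4^4^('v + 'v))) set" where
  "Conf U oU V G J = {(g, \<phi>, \<V>).
      lorentzian_on U g \<and> smooth_on U \<phi> \<and> \<phi> ` U \<subseteq> V \<and> smooth_on U \<V> \<and>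
      (\<forall>x\<in>U. \<forall>k. transpose (\<V> x $ k) = - (\<V> x $ k)) \<and>
      (\<forall>x\<in>U. \<forall>k. hodge (g x) (oU x) (\<V> x $ k) =
          - (\<Sum>l\<in>UNIV. J (\<phi> x) $ k $ l *\<^sub>R \<V> x $ l))}"

definition energy_momentum :: "(real^'s::finite \<Rightarrow> real^'s^'s) \<Rightarrow> (real^'s \<Rightarrow> real^('v::finite + 'v)^('v + 'v)) \<Rightarrow>
    (real^4 \<Rightarrow> real^4^4) \<Rightarrow> (real^4 \<Rightarrow> real^'s) \<Rightarrow> (real^4 \<Rightarrow> real^4^4^('v + 'v)) \<Rightarrow> real^4 \<Rightarrow> real^4^4" where
  "energy_momentum G J g \<phi> \<V> x = (let
      gx = g x; gi = matrix_inv gx;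
      d\<phi> = (\<lambda>a. frechet_derivative \<phi> (at x) (axis a 1));
      Gm = G (\<phi> x); Im = snd (gamma_inv (J (\<phi> x)));
      F = (\<lambda>L. \<V> x $ Inl L);
      kin = (\<Sum>i\<in>UNIV. \<Sum>j\<in>UNIV. Gm $ i $ j *
               (\<Sum>c\<in>UNIV. \<Sum>d\<in>UNIV. gi $ c $ d * d\<phi> c $ i * d\<phi> d $ j));
      FF = (\<Sum>L\<in>UNIV. \<Sum>S\<in>UNIV. Im $ L $ S *
               (\<Sum>c\<in>UNIV. \<Sum>d\<in>UNIV. \<Sum>e\<in>UNIV. \<Sum>f\<in>UNIV.
                  gi $ c $ e * gi $ d $ f * F L $ c $ d * F S $ e $ f))
    in (\<chi> a b. (\<Sum>i\<in>UNIV. \<Sum>j\<in>UNIV. Gm $ i $ j * d\<phi> a $ i * d\<phi> b $ j)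
          - 1/2 * gx $ a $ b * kin
          + 2 * (\<Sum>L\<in>UNIV. \<Sum>S\<in>UNIV. Im $ L $ S *
                   (\<Sum>c\<in>UNIV. \<Sum>d\<in>UNIV. F L $ a $ c * gi $ c $ d * F S $ b $ d))
          - 1/2 * gx $ a $ b * FF))"

definition push_metric :: "(real^'s::finite) set \<Rightarrow> (real^'s \<Rightarrow> real^'s) \<Rightarrow> (real^'s \<Rightarrow> real^'s^'s) \<Rightarrow> real^'s \<Rightarrow> real^'s^'s" where
  "push_metric V f G y = (let h = inv_into V f; D = frechet_derivative h (at y) in
     (\<chi> i j. \<Sum>k\<in>UNIV. \<Sum>l\<in>UNIV. G (h y) $ k $ l * D (axis i 1) $ k * D (axis j 1) $ l))"

definition J_transf :: "(real^'s::finite) set \<Rightarrow> (real^'s \<Rightarrow> real^'s) \<Rightarrow> real^('v::finite + 'v)^('v + 'v) \<Rightarrow>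
    (real^'s \<Rightarrow> real^('v + 'v)^('v + 'v)) \<Rightarrow> real^'s \<Rightarrow> real^('v + 'v)^('v + 'v)" where
  "J_transf V f A J y = A ** J (inv_into V f y) ** matrix_inv A"

end

theory Submission
  imports Defs
begin

lemma vector_4 [simp]:
 "(vector [x,y,z,w] ::('a::zero)^4)$1 = x"
 "(vector [x,y,z,w] ::('a::zero)^4)$2 = y"
 "(vector [x,y,z,w] ::('a::zero)^4)$3 = z"
 "(vector [x,y,z,w] ::('a::zero)^4)$4 = w"
  unfolding vector_def by simp_all

lemma det_4:
  "det (A::'a::comm_ring_1^4^4) =
   A$1$1*A$2$2*A$3$3*A$4$4 - A$1$1*A$2$2*A$3$4*A$4$3 - A$1$1*A$2$3*A$3$2*A$4$4
 + A$1$1*A$2$3*A$3$4*A$4$2 + A$1$1*A$2$4*A$3$2*A$4$3 - A$1$1*A$2$4*A$3$3*A$4$2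
 - A$1$2*A$2$1*A$3$3*A$4$4 + A$1$2*A$2$1*A$3$4*A$4$3 + A$1$2*A$2$3*A$3$1*A$4$4
 - A$1$2*A$2$3*A$3$4*A$4$1 - A$1$2*A$2$4*A$3$1*A$4$3 + A$1$2*A$2$4*A$3$3*A$4$1
 + A$1$3*A$2$1*A$3$2*A$4$4 - A$1$3*A$2$1*A$3$4*A$4$2 - A$1$3*A$2$2*A$3$1*A$4$4
 + A$1$3*A$2$2*A$3$4*A$4$1 + A$1$3*A$2$4*A$3$1*A$4$2 - A$1$3*A$2$4*A$3$2*A$4$1
 - A$1$4*A$2$1*A$3$2*A$4$3 + A$1$4*A$2$1*A$3$3*A$4$2 + A$1$4*A$2$2*A$3$1*A$4$3
 - A$1$4*A$2$2*A$3$3*A$4$1 - A$1$4*A$2$3*A$3$1*A$4$2 + A$1$4*A$2$3*A$3$2*A$4$1"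
proof -
  have f1: "finite {2::4, 3, 4}" "1 \<notin> {2::4, 3, 4}" by auto
  have f2: "finite {3::4, 4}" "2 \<notin> {3::4, 4}" by auto
  have f3: "finite {4::4}" "3 \<notin> {4::4}" by auto
  show ?thesis
    unfolding det_def UNIV_4
    unfolding sum_over_permutations_insert[OF f1]
    unfolding sum_over_permutations_insert[OF f2]
    unfolding sum_over_permutations_insert[OF f3]
    unfolding permutes_sing
    by (simp add: sign_swap_id permutation_swap_id permutation_compose sign_compose sign_id swap_id_eq algebra_simps)
qed

lemma levi_tab [simp]:
  "levi 1 1 1 1 = 0"
  "levi 1 1 1 2 = 0"
  "levi 1 1 1 3 = 0"
  "levi 1 1 1 4 = 0"
  "levi 1 1 2 1 = 0"
  "levi 1 1 2 2 = 0"
  "levi 1 1 2 3 = 0"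
  "levi 1 1 2 4 = 0"
  "levi 1 1 3 1 = 0"
  "levi 1 1 3 2 = 0"
  "levi 1 1 3 3 = 0"
  "levi 1 1 3 4 = 0"
  "levi 1 1 4 1 = 0"
  "levi 1 1 4 2 = 0"
  "levi 1 1 4 3 = 0"
  "levi 1 1 4 4 = 0"
  "levi 1 2 1 1 = 0"
  "levi 1 2 1 2 = 0"
  "levi 1 2 1 3 = 0"
  "levi 1 2 1 4 = 0"
  "levi 1 2 2 1 = 0"
  "levi 1 2 2 2 = 0"
  "levi 1 2 2 3 = 0"
  "levi 1 2 2 4 = 0"
  "levi 1 2 3 1 = 0"
  "levi 1 2 3 2 = 0"
  "levi 1 2 3 3 = 0"
  "levi 1 2 3 4 = 1"
  "levi 1 2 4 1 = 0"
  "levi 1 2 4 2 = 0"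
  "levi 1 2 4 3 = -1"
  "levi 1 2 4 4 = 0"
  "levi 1 3 1 1 = 0"
  "levi 1 3 1 2 = 0"
  "levi 1 3 1 3 = 0"
  "levi 1 3 1 4 = 0"
  "levi 1 3 2 1 = 0"
  "levi 1 3 2 2 = 0"
  "levi 1 3 2 3 = 0"
  "levi 1 3 2 4 = -1"
  "levi 1 3 3 1 = 0"
  "levi 1 3 3 2 = 0"
  "levi 1 3 3 3 = 0"
  "levi 1 3 3 4 = 0"
  "levi 1 3 4 1 = 0"
  "levi 1 3 4 2 = 1"
  "levi 1 3 4 3 = 0"
  "levi 1 3 4 4 = 0"
  "levi 1 4 1 1 = 0"
  "levi 1 4 1 2 = 0"
  "levi 1 4 1 3 = 0"
  "levi 1 4 1 4 = 0"
  "levi 1 4 2 1 = 0"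
  "levi 1 4 2 2 = 0"
  "levi 1 4 2 3 = 1"
  "levi 1 4 2 4 = 0"
  "levi 1 4 3 1 = 0"
  "levi 1 4 3 2 = -1"
  "levi 1 4 3 3 = 0"
  "levi 1 4 3 4 = 0"
  "levi 1 4 4 1 = 0"
  "levi 1 4 4 2 = 0"
  "levi 1 4 4 3 = 0"
  "levi 1 4 4 4 = 0"
  "levi 2 1 1 1 = 0"
  "levi 2 1 1 2 = 0"
  "levi 2 1 1 3 = 0"
  "levi 2 1 1 4 = 0"
  "levi 2 1 2 1 = 0"
  "levi 2 1 2 2 = 0"
  "levi 2 1 2 3 = 0"
  "levi 2 1 2 4 = 0"
  "levi 2 1 3 1 = 0"
  "levi 2 1 3 2 = 0"
  "levi 2 1 3 3 = 0"
  "levi 2 1 3 4 = -1"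
  "levi 2 1 4 1 = 0"
  "levi 2 1 4 2 = 0"
  "levi 2 1 4 3 = 1"
  "levi 2 1 4 4 = 0"
  "levi 2 2 1 1 = 0"
  "levi 2 2 1 2 = 0"
  "levi 2 2 1 3 = 0"
  "levi 2 2 1 4 = 0"
  "levi 2 2 2 1 = 0"
  "levi 2 2 2 2 = 0"
  "levi 2 2 2 3 = 0"
  "levi 2 2 2 4 = 0"
  "levi 2 2 3 1 = 0"
  "levi 2 2 3 2 = 0"
  "levi 2 2 3 3 = 0"
  "levi 2 2 3 4 = 0"
  "levi 2 2 4 1 = 0"
  "levi 2 2 4 2 = 0"
  "levi 2 2 4 3 = 0"
  "levi 2 2 4 4 = 0"
  "levi 2 3 1 1 = 0"
  "levi 2 3 1 2 = 0"
  "levi 2 3 1 3 = 0"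
  "levi 2 3 1 4 = 1"
  "levi 2 3 2 1 = 0"
  "levi 2 3 2 2 = 0"
  "levi 2 3 2 3 = 0"
  "levi 2 3 2 4 = 0"
  "levi 2 3 3 1 = 0"
  "levi 2 3 3 2 = 0"
  "levi 2 3 3 3 = 0"
  "levi 2 3 3 4 = 0"
  "levi 2 3 4 1 = -1"
  "levi 2 3 4 2 = 0"
  "levi 2 3 4 3 = 0"
  "levi 2 3 4 4 = 0"
  "levi 2 4 1 1 = 0"
  "levi 2 4 1 2 = 0"
  "levi 2 4 1 3 = -1"
  "levi 2 4 1 4 = 0"
  "levi 2 4 2 1 = 0"
  "levi 2 4 2 2 = 0"
  "levi 2 4 2 3 = 0"
  "levi 2 4 2 4 = 0"
  "levi 2 4 3 1 = 1"
  "levi 2 4 3 2 = 0"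
  "levi 2 4 3 3 = 0"
  "levi 2 4 3 4 = 0"
  "levi 2 4 4 1 = 0"
  "levi 2 4 4 2 = 0"
  "levi 2 4 4 3 = 0"
  "levi 2 4 4 4 = 0"
  "levi 3 1 1 1 = 0"
  "levi 3 1 1 2 = 0"
  "levi 3 1 1 3 = 0"
  "levi 3 1 1 4 = 0"
  "levi 3 1 2 1 = 0"
  "levi 3 1 2 2 = 0"
  "levi 3 1 2 3 = 0"
  "levi 3 1 2 4 = 1"
  "levi 3 1 3 1 = 0"
  "levi 3 1 3 2 = 0"
  "levi 3 1 3 3 = 0"
  "levi 3 1 3 4 = 0"
  "levi 3 1 4 1 = 0"
  "levi 3 1 4 2 = -1"
  "levi 3 1 4 3 = 0"
  "levi 3 1 4 4 = 0"
  "levi 3 2 1 1 = 0"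
  "levi 3 2 1 2 = 0"
  "levi 3 2 1 3 = 0"
  "levi 3 2 1 4 = -1"
  "levi 3 2 2 1 = 0"
  "levi 3 2 2 2 = 0"
  "levi 3 2 2 3 = 0"
  "levi 3 2 2 4 = 0"
  "levi 3 2 3 1 = 0"
  "levi 3 2 3 2 = 0"
  "levi 3 2 3 3 = 0"
  "levi 3 2 3 4 = 0"
  "levi 3 2 4 1 = 1"
  "levi 3 2 4 2 = 0"
  "levi 3 2 4 3 = 0"
  "levi 3 2 4 4 = 0"
  "levi 3 3 1 1 = 0"
  "levi 3 3 1 2 = 0"
  "levi 3 3 1 3 = 0"
  "levi 3 3 1 4 = 0"
  "levi 3 3 2 1 = 0"
  "levi 3 3 2 2 = 0"
  "levi 3 3 2 3 = 0"
  "levi 3 3 2 4 = 0"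
  "levi 3 3 3 1 = 0"
  "levi 3 3 3 2 = 0"
  "levi 3 3 3 3 = 0"
  "levi 3 3 3 4 = 0"
  "levi 3 3 4 1 = 0"
  "levi 3 3 4 2 = 0"
  "levi 3 3 4 3 = 0"
  "levi 3 3 4 4 = 0"
  "levi 3 4 1 1 = 0"
  "levi 3 4 1 2 = 1"
  "levi 3 4 1 3 = 0"
  "levi 3 4 1 4 = 0"
  "levi 3 4 2 1 = -1"
  "levi 3 4 2 2 = 0"
  "levi 3 4 2 3 = 0"
  "levi 3 4 2 4 = 0"
  "levi 3 4 3 1 = 0"
  "levi 3 4 3 2 = 0"
  "levi 3 4 3 3 = 0"
  "levi 3 4 3 4 = 0"
  "levi 3 4 4 1 = 0"
  "levi 3 4 4 2 = 0"
  "levi 3 4 4 3 = 0"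
  "levi 3 4 4 4 = 0"
  "levi 4 1 1 1 = 0"
  "levi 4 1 1 2 = 0"
  "levi 4 1 1 3 = 0"
  "levi 4 1 1 4 = 0"
  "levi 4 1 2 1 = 0"
  "levi 4 1 2 2 = 0"
  "levi 4 1 2 3 = -1"
  "levi 4 1 2 4 = 0"
  "levi 4 1 3 1 = 0"
  "levi 4 1 3 2 = 1"
  "levi 4 1 3 3 = 0"
  "levi 4 1 3 4 = 0"
  "levi 4 1 4 1 = 0"
  "levi 4 1 4 2 = 0"
  "levi 4 1 4 3 = 0"
  "levi 4 1 4 4 = 0"
  "levi 4 2 1 1 = 0"
  "levi 4 2 1 2 = 0"
  "levi 4 2 1 3 = 1"
  "levi 4 2 1 4 = 0"
  "levi 4 2 2 1 = 0"
  "levi 4 2 2 2 = 0"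
  "levi 4 2 2 3 = 0"
  "levi 4 2 2 4 = 0"
  "levi 4 2 3 1 = -1"
  "levi 4 2 3 2 = 0"
  "levi 4 2 3 3 = 0"
  "levi 4 2 3 4 = 0"
  "levi 4 2 4 1 = 0"
  "levi 4 2 4 2 = 0"
  "levi 4 2 4 3 = 0"
  "levi 4 2 4 4 = 0"
  "levi 4 3 1 1 = 0"
  "levi 4 3 1 2 = -1"
  "levi 4 3 1 3 = 0"
  "levi 4 3 1 4 = 0"
  "levi 4 3 2 1 = 1"
  "levi 4 3 2 2 = 0"
  "levi 4 3 2 3 = 0"
  "levi 4 3 2 4 = 0"
  "levi 4 3 3 1 = 0"
  "levi 4 3 3 2 = 0"
  "levi 4 3 3 3 = 0"
  "levi 4 3 3 4 = 0"
  "levi 4 3 4 1 = 0"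
  "levi 4 3 4 2 = 0"
  "levi 4 3 4 3 = 0"
  "levi 4 3 4 4 = 0"
  "levi 4 4 1 1 = 0"
  "levi 4 4 1 2 = 0"
  "levi 4 4 1 3 = 0"
  "levi 4 4 1 4 = 0"
  "levi 4 4 2 1 = 0"
  "levi 4 4 2 2 = 0"
  "levi 4 4 2 3 = 0"
  "levi 4 4 2 4 = 0"
  "levi 4 4 3 1 = 0"
  "levi 4 4 3 2 = 0"
  "levi 4 4 3 3 = 0"
  "levi 4 4 3 4 = 0"
  "levi 4 4 4 1 = 0"
  "levi 4 4 4 2 = 0"
  "levi 4 4 4 3 = 0"
  "levi 4 4 4 4 = 0"
  by (simp_all add: levi_def det_4 axis_def)

lemma det_expand4:
  "det (vector[u1,u2,u3,u4] :: real^4^4) =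
   (\<Sum>i\<in>UNIV. \<Sum>j\<in>UNIV. \<Sum>k\<in>UNIV. \<Sum>l\<in>UNIV. u1$i * u2$j * u3$k * u4$l * levi i j k l)"
  by (simp add: det_4 sum_4 algebra_simps)

lemma levi_L1:
  fixes M :: "real^4^4"
  shows "(\<Sum>i\<in>UNIV. \<Sum>j\<in>UNIV. \<Sum>k\<in>UNIV. \<Sum>l\<in>UNIV. M$a$i * M$b$j * M$c$k * M$d$l * levi i j k l)
     = levi a b c d * det M"
proof -
  have "(vector[axis a 1, axis b 1, axis c 1, axis d 1] :: real^4^4) ** M = vector[M$a, M$b, M$c, M$d]"
    unfolding vec_eq_iff forall_4 by (simp add: matrix_matrix_mult_def axis_def mult_if_delta)
  then have "det (vector[M$a, M$b, M$c, M$d] :: real^4^4) = levi a b c d * det M"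
    by (metis det_mul levi_def)
  then show ?thesis by (simp add: det_expand4)
qed

definition Zl :: "real^4^4 \<Rightarrow> 4 \<Rightarrow> 4 \<Rightarrow> real" where
  "Zl X a c = (\<Sum>p\<in>UNIV. \<Sum>q\<in>UNIV. levi a c p q * X$p$q)"

lemma Zl_simps [simp]:
  "Zl X 1 1 = 0"
  "Zl X 1 2 = X$3$4 - X$4$3"
  "Zl X 1 3 = - X$2$4 + X$4$2"
  "Zl X 1 4 = X$2$3 - X$3$2"
  "Zl X 2 1 = - X$3$4 + X$4$3"
  "Zl X 2 2 = 0"
  "Zl X 2 3 = X$1$4 - X$4$1"
  "Zl X 2 4 = - X$1$3 + X$3$1"
  "Zl X 3 1 = X$2$4 - X$4$2"
  "Zl X 3 2 = - X$1$4 + X$4$1"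
  "Zl X 3 3 = 0"
  "Zl X 3 4 = X$1$2 - X$2$1"
  "Zl X 4 1 = - X$2$3 + X$3$2"
  "Zl X 4 2 = X$1$3 - X$3$1"
  "Zl X 4 3 = - X$1$2 + X$2$1"
  "Zl X 4 4 = 0"
  by (simp_all add: Zl_def sum_4)

lemma levi_LC0:
  fixes X Y :: "real^4^4"
  shows "\<forall>a b. (\<Sum>c\<in>UNIV. Zl X a c * Zl Y b c) =
     (if a = b then (\<Sum>p\<in>UNIV. \<Sum>q\<in>UNIV. X$p$q * (Y$p$q - Y$q$p)) else 0)
     - (\<Sum>q\<in>UNIV. (X$b$q - X$q$b) * Y$a$q) + (\<Sum>p\<in>UNIV. (X$b$p - X$p$b) * Y$p$a)"
  unfolding forall_4 by (simp add: sum_4 algebra_simps)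

lemma out2: "(\<Sum>a\<in>A. \<Sum>b\<in>B. \<Sum>c\<in>C. f a b c) = (\<Sum>c\<in>C. \<Sum>a\<in>A. \<Sum>b\<in>B. f a b c)"
proof -
  have "(\<Sum>a\<in>A. \<Sum>b\<in>B. \<Sum>c\<in>C. f a b c) = (\<Sum>a\<in>A. \<Sum>c\<in>C. \<Sum>b\<in>B. f a b c)"
    by (rule sum.cong[OF refl], rule sum.swap)
  also have "\<dots> = (\<Sum>c\<in>C. \<Sum>a\<in>A. \<Sum>b\<in>B. f a b c)" by (rule sum.swap)
  finally show ?thesis .
qed
lemma out3: "(\<Sum>a\<in>A. \<Sum>b\<in>B. \<Sum>c\<in>C. \<Sum>d\<in>D. f a b c d) = (\<Sum>d\<in>D. \<Sum>a\<in>A. \<Sum>b\<in>B. \<Sum>c\<in>C. f a b c d)"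
proof -
  have "(\<Sum>a\<in>A. \<Sum>b\<in>B. \<Sum>c\<in>C. \<Sum>d\<in>D. f a b c d) = (\<Sum>a\<in>A. \<Sum>d\<in>D. \<Sum>b\<in>B. \<Sum>c\<in>C. f a b c d)"
    by (rule sum.cong[OF refl], rule out2)
  also have "\<dots> = (\<Sum>d\<in>D. \<Sum>a\<in>A. \<Sum>b\<in>B. \<Sum>c\<in>C. f a b c d)" by (rule sum.swap)
  finally show ?thesis .
qed
lemma out4: "(\<Sum>a\<in>A. \<Sum>b\<in>B. \<Sum>c\<in>C. \<Sum>d\<in>D. \<Sum>e\<in>E. f a b c d e) = (\<Sum>e\<in>E. \<Sum>a\<in>A. \<Sum>b\<in>B. \<Sum>c\<in>C. \<Sum>d\<in>D. f a b c d e)"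
proof -
  have "(\<Sum>a\<in>A. \<Sum>b\<in>B. \<Sum>c\<in>C. \<Sum>d\<in>D. \<Sum>e\<in>E. f a b c d e) = (\<Sum>a\<in>A. \<Sum>e\<in>E. \<Sum>b\<in>B. \<Sum>c\<in>C. \<Sum>d\<in>D. f a b c d e)"
    by (rule sum.cong[OF refl], rule out3)
  also have "\<dots> = (\<Sum>e\<in>E. \<Sum>a\<in>A. \<Sum>b\<in>B. \<Sum>c\<in>C. \<Sum>d\<in>D. f a b c d e)" by (rule sum.swap)
  finally show ?thesis .
qed
lemma swap22: "(\<Sum>a\<in>A. \<Sum>b\<in>B. \<Sum>c\<in>C. \<Sum>d\<in>D. f a b c d) = (\<Sum>c\<in>C. \<Sum>d\<in>D. \<Sum>a\<in>A. \<Sum>b\<in>B. f a b c d)"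
proof -
  have "(\<Sum>a\<in>A. \<Sum>b\<in>B. \<Sum>c\<in>C. \<Sum>d\<in>D. f a b c d) = (\<Sum>c\<in>C. \<Sum>a\<in>A. \<Sum>b\<in>B. \<Sum>d\<in>D. f a b c d)"
    by (rule out2)
  also have "\<dots> = (\<Sum>c\<in>C. \<Sum>d\<in>D. \<Sum>a\<in>A. \<Sum>b\<in>B. f a b c d)"
    by (rule sum.cong[OF refl], rule out2)
  finally show ?thesis .
qed

lemma minv:
  fixes A :: "'a::semiring_1^'n^'n"
  assumes "invertible A"
  shows "A ** matrix_inv A = mat 1" "matrix_inv A ** A = mat 1"
  using someI_ex[OF assms[unfolded invertible_def]] unfolding matrix_inv_def by auto

lemma minv_unique:
  fixes A B :: "'a::comm_semiring_1^'n^'n"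
  assumes "A ** B = mat 1" "B ** A = mat 1"
  shows "matrix_inv A = B"
proof -
  have inv: "invertible A" using assms unfolding invertible_def by blast
  have "matrix_inv A = (B ** A) ** matrix_inv A" using assms by (simp add: matrix_mul_lid)
  also have "\<dots> = B ** (A ** matrix_inv A)" by (simp add: matrix_mul_assoc)
  also have "\<dots> = B" using minv[OF inv] by (simp add: matrix_mul_rid)
  finally show ?thesis .
qed

lemma minv_sym:
  fixes A :: "'a::comm_semiring_1^'n^'n"
  assumes "invertible A" "transpose A = A"
  shows "transpose (matrix_inv A) = matrix_inv A"
proof -
  have "transpose (matrix_inv A ** A) = mat 1"
    using minv(2)[OF assms(1)] by simp
  then have 1: "A ** transpose (matrix_inv A) = mat 1"
    by (simp add: matrix_transpose_mul assms(2))
  have "transpose (A ** matrix_inv A) = mat 1"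
    using minv(1)[OF assms(1)] by simp
  then have 2: "transpose (matrix_inv A) ** A = mat 1"
    by (simp add: matrix_transpose_mul assms(2))
  show ?thesis using minv_unique[OF 1 2] by simp
qed

lemma mat_mul_comp: "(A ** B) $ i $ j = (\<Sum>k\<in>UNIV. A$i$k * B$k$j)"
  by (simp add: matrix_matrix_mult_def)

lemma mat1_comp: "(mat 1 :: 'a::{zero,one}^'n^'n) $ i $ j = (if i = j then 1 else 0)"
  by (simp add: mat_def)

lemma inv_comp:
  fixes A :: "'a::semiring_1^'n^'n"
  assumes "invertible A"
  shows "(\<Sum>k\<in>UNIV. A$i$k * matrix_inv A$k$j) = (if i = j then 1 else 0)"
        "(\<Sum>k\<in>UNIV. matrix_inv A$i$k * A$k$j) = (if i = j then 1 else 0)"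
proof -
  have "(A ** matrix_inv A)$i$j = (mat 1 :: 'a^'n^'n)$i$j" "(matrix_inv A ** A)$i$j = (mat 1 :: 'a^'n^'n)$i$j"
    using minv[OF assms] by simp_all
  then show "(\<Sum>k\<in>UNIV. A$i$k * matrix_inv A$k$j) = (if i = j then 1 else 0)"
        "(\<Sum>k\<in>UNIV. matrix_inv A$i$k * A$k$j) = (if i = j then 1 else 0)"
    unfolding mat_mul_comp mat1_comp by simp_all
qed

lemma delta_sum [simp]:
  fixes f :: "'a::finite \<Rightarrow> 'b::semiring_1"
  shows "(\<Sum>x\<in>UNIV. (if a = x then 1 else 0) * f x) = f a"
    "(\<Sum>x\<in>UNIV. (if x = a then 1 else 0) * f x) = f a"
    "(\<Sum>x\<in>UNIV. f x * (if a = x then 1 else 0)) = f a"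
    "(\<Sum>x\<in>UNIV. f x * (if x = a then 1 else 0)) = f a"
  by (simp_all add: if_distrib[of "\<lambda>x. x * _"] if_distrib[of "\<lambda>x. _ * x"] cong: if_cong)

lemma hodge_expand:
  "hodge gm s Z $ a $ c = s * sqrt \<bar>det gm\<bar> / 2 *
     (\<Sum>p\<in>UNIV. \<Sum>q\<in>UNIV. levi a c p q * (\<Sum>e\<in>UNIV. \<Sum>f\<in>UNIV. matrix_inv gm$p$e * matrix_inv gm$q$f * Z$e$f))"
  by (simp add: hodge_def Let_def)

lemma hodge_quad:
  fixes gm X Y :: "real^4^4" and s :: real
  assumes sym: "transpose gm = gm" and dneg: "det gm < 0" and s: "s = 1 \<or> s = -1"
    and Xa: "transpose X = - X" and Ya: "transpose Y = - Y"
  shows "(\<Sum>c\<in>UNIV. \<Sum>d\<in>UNIV. hodge gm s X $a$c * matrix_inv gm $c$d * hodge gm s Y $b$d)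
       = (\<Sum>c\<in>UNIV. \<Sum>d\<in>UNIV. Y$a$c * matrix_inv gm $c$d * X$b$d)
         - 1/2 * gm$a$b * (\<Sum>c\<in>UNIV. \<Sum>d\<in>UNIV. \<Sum>e\<in>UNIV. \<Sum>f\<in>UNIV.
              matrix_inv gm $c$e * matrix_inv gm $d$f * X$c$d * Y$e$f)"
proof -
  define gi where "gi = matrix_inv gm"
  have inv: "invertible gm" using dneg by (simp add: invertible_det_nz)
  have gis: "gi$i$j = gi$j$i" for i j
  proof -
    have "(transpose gi)$j$i = gi$j$i" using minv_sym[OF inv sym] unfolding gi_def by simp
    then show ?thesis by (simp add: transpose_def)
  qed
  have gms: "gm$i$j = gm$j$i" for i j
  proof -
    have "(transpose gm)$j$i = gm$j$i" using sym by simp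
    then show ?thesis by (simp add: transpose_def)
  qed
  have gmgi: "(\<Sum>k\<in>UNIV. gm$i$k * gi$k$j) = (if i = j then 1 else 0)" for i j
    using inv_comp(1)[OF inv] unfolding gi_def .
  have gigm: "(\<Sum>k\<in>UNIV. gi$i$k * gm$k$j) = (if i = j then 1 else 0)" for i j
    using inv_comp(2)[OF inv] unfolding gi_def .
  define k where "k = s * sqrt \<bar>det gm\<bar> / 2"
  have hZ: "hodge gm s Z $ a $ c = k *
     (\<Sum>p\<in>UNIV. \<Sum>q\<in>UNIV. levi a c p q * (\<Sum>e\<in>UNIV. \<Sum>f\<in>UNIV. gi$p$e * gi$q$f * Z$e$f))" for Z a c
    unfolding hodge_expand k_def gi_def ..
  define Xu where "Xu = (\<chi> p q. \<Sum>e\<in>UNIV. \<Sum>f\<in>UNIV. gi$p$e * gi$q$f * X$e$f)"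
  have hX: "hodge gm s X $ a $ c = k * Zl Xu a c" for a c
    unfolding hZ Zl_def Xu_def by simp
  have L1g: "(\<Sum>i\<in>UNIV. \<Sum>j\<in>UNIV. \<Sum>k\<in>UNIV. \<Sum>l\<in>UNIV. gi$b2$i * gi$c$j * gi$k$e * gi$l$f * levi i j k l)
     = levi b2 c e f * det gi" for b2 c e f
    using levi_L1[of gi b2 c e f] by (simp add: gis[of e] gis[of f])
  have h2: "(\<Sum>b\<in>UNIV. gi$b2$b * (\<Sum>d\<in>UNIV. gi$c$d * hodge gm s Y $b$d)) = k * det gi * Zl Y b2 c" for b2 c
  proof -
    have "(\<Sum>b\<in>UNIV. gi$b2$b * (\<Sum>d\<in>UNIV. gi$c$d * hodge gm s Y $b$d)) =
      (\<Sum>b\<in>UNIV. \<Sum>d\<in>UNIV. \<Sum>p\<in>UNIV. \<Sum>q\<in>UNIV. \<Sum>e\<in>UNIV. \<Sum>f\<in>UNIV.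
          k * Y$e$f * (gi$b2$b * gi$c$d * gi$p$e * gi$q$f * levi b d p q))"
      unfolding hZ by (simp add: sum_distrib_left mult_ac)
    also have "\<dots> = (\<Sum>e\<in>UNIV. \<Sum>b\<in>UNIV. \<Sum>d\<in>UNIV. \<Sum>p\<in>UNIV. \<Sum>q\<in>UNIV. \<Sum>f\<in>UNIV.
          k * Y$e$f * (gi$b2$b * gi$c$d * gi$p$e * gi$q$f * levi b d p q))"
      by (rule out4)
    also have "\<dots> = (\<Sum>e\<in>UNIV. \<Sum>f\<in>UNIV. \<Sum>b\<in>UNIV. \<Sum>d\<in>UNIV. \<Sum>p\<in>UNIV. \<Sum>q\<in>UNIV.
          k * Y$e$f * (gi$b2$b * gi$c$d * gi$p$e * gi$q$f * levi b d p q))"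
      by (rule sum.cong[OF refl], rule out4)
    also have "\<dots> = (\<Sum>e\<in>UNIV. \<Sum>f\<in>UNIV. k * Y$e$f * (levi b2 c e f * det gi))"
      by (simp only: sum_distrib_left[symmetric] L1g)
    also have "\<dots> = k * det gi * Zl Y b2 c"
      by (simp add: Zl_def sum_distrib_left mult_ac)
    finally show ?thesis .
  qed
  have h3: "(\<Sum>d\<in>UNIV. gi$c$d * hodge gm s Y $b$d) = k * det gi * (\<Sum>b2\<in>UNIV. gm$b$b2 * Zl Y b2 c)" for b c
  proof -
    define T where "T = (\<lambda>b. \<Sum>d\<in>UNIV. gi$c$d * hodge gm s Y $b$d)"
    have "(\<Sum>b2\<in>UNIV. gm$b$b2 * (k * det gi * Zl Y b2 c)) = (\<Sum>b2\<in>UNIV. gm$b$b2 * (\<Sum>b'\<in>UNIV. gi$b2$b' * T b'))"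
      by (simp add: h2 T_def)
    also have "\<dots> = (\<Sum>b2\<in>UNIV. \<Sum>b'\<in>UNIV. gm$b$b2 * gi$b2$b' * T b')"
      by (simp add: sum_distrib_left mult.assoc)
    also have "\<dots> = (\<Sum>b'\<in>UNIV. \<Sum>b2\<in>UNIV. gm$b$b2 * gi$b2$b' * T b')"
      by (rule sum.swap)
    also have "\<dots> = (\<Sum>b'\<in>UNIV. (\<Sum>b2\<in>UNIV. gm$b$b2 * gi$b2$b') * T b')"
      by (simp add: sum_distrib_right)
    also have "\<dots> = T b"
      by (simp add: gmgi)
    finally show ?thesis by (simp add: T_def sum_distrib_left mult_ac)
  qed
  have h4: "(\<Sum>c\<in>UNIV. \<Sum>d\<in>UNIV. hodge gm s X $a$c * gi $c$d * hodge gm s Y $b$d)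
     = k * k * det gi * (\<Sum>b2\<in>UNIV. gm$b$b2 * (\<Sum>c\<in>UNIV. Zl Xu a c * Zl Y b2 c))"
  proof -
    have "(\<Sum>c\<in>UNIV. \<Sum>d\<in>UNIV. hodge gm s X $a$c * gi $c$d * hodge gm s Y $b$d)
       = (\<Sum>c\<in>UNIV. hodge gm s X $a$c * (\<Sum>d\<in>UNIV. gi $c$d * hodge gm s Y $b$d))"
      by (simp add: sum_distrib_left mult.assoc)
    also have "\<dots> = (\<Sum>c\<in>UNIV. \<Sum>b2\<in>UNIV. k * k * det gi * (gm$b$b2 * (Zl Xu a c * Zl Y b2 c)))"
      by (simp add: hX h3 sum_distrib_left mult_ac)
    also have "\<dots> = (\<Sum>b2\<in>UNIV. \<Sum>c\<in>UNIV. k * k * det gi * (gm$b$b2 * (Zl Xu a c * Zl Y b2 c)))"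
      by (rule sum.swap)
    also have "\<dots> = k * k * det gi * (\<Sum>b2\<in>UNIV. gm$b$b2 * (\<Sum>c\<in>UNIV. Zl Xu a c * Zl Y b2 c))"
      by (simp add: sum_distrib_left)
    finally show ?thesis .
  qed
  have h5: "k * k * det gi = - 1/4"
  proof -
    have "det gm * det gi = 1"
      using minv(1)[OF inv] unfolding gi_def by (metis det_I det_mul)
    moreover have "k * k = s * s * \<bar>det gm\<bar> / 4"
      proof -
      have "sqrt \<bar>det gm\<bar> * sqrt \<bar>det gm\<bar> = \<bar>det gm\<bar>" by simp
      then show ?thesis unfolding k_def by (simp add: field_simps)
    qed
    moreover have "s * s = 1" using s by auto
    moreover have "\<bar>det gm\<bar> = - det gm" using dneg by simp
    ultimately have A: "k * k = - det gm / 4" "det gm * det gi = 1" by simp_all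
    have "k * k * det gi = (- det gm / 4) * det gi" by (simp add: A(1))
    also have "\<dots> = - (det gm * det gi) / 4" by simp
    finally show ?thesis using A(2) by simp
  qed
  have YA: "Y$q$p = - Y$p$q" for p q
  proof -
    have "(transpose Y)$p$q = (- Y)$p$q" using Ya by simp
    then show ?thesis by (simp add: transpose_def)
  qed
  have XA: "X$q$p = - X$p$q" for p q
  proof -
    have "(transpose X)$p$q = (- X)$p$q" using Xa by simp
    then show ?thesis by (simp add: transpose_def)
  qed
  have XuA: "Xu$q$p = - Xu$p$q" for p q
  proof -
    have "Xu$q$p = (\<Sum>e\<in>UNIV. \<Sum>f\<in>UNIV. gi$q$e * gi$p$f * X$e$f)" by (simp add: Xu_def)
    also have "\<dots> = (\<Sum>f\<in>UNIV. \<Sum>e\<in>UNIV. gi$q$e * gi$p$f * X$e$f)" by (rule sum.swap)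
    also have "\<dots> = (\<Sum>f\<in>UNIV. \<Sum>e\<in>UNIV. - (gi$p$f * gi$q$e * X$f$e))"
    proof (intro sum.cong refl)
      fix f e
      show "gi$q$e * gi$p$f * X$e$f = - (gi$p$f * gi$q$e * X$f$e)" by (simp add: XA[of f e])
    qed
    also have "\<dots> = - Xu$p$q" by (simp add: Xu_def sum_negf)
    finally show ?thesis .
  qed
  define S0 where "S0 = (\<Sum>p\<in>UNIV. \<Sum>q\<in>UNIV. Xu$p$q * Y$p$q)"
  have br: "(\<Sum>c\<in>UNIV. Zl Xu a c * Zl Y b2 c) = (if a = b2 then 2 * S0 else 0) - 4 * (\<Sum>q\<in>UNIV. Xu$b2$q * Y$a$q)" for b2
  proof -
    have b1: "(Xu$b2$q - Xu$q$b2) * Y$a$q = 2 * (Xu$b2$q * Y$a$q)" for q by (simp add: XuA[of b2 q])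
    have b2: "(Xu$b2$p - Xu$p$b2) * Y$p$a = - 2 * (Xu$b2$p * Y$a$p)" for p by (simp add: XuA[of b2 p] YA[of a p])
    have b3: "Xu$p$q * (Y$p$q - Y$q$p) = 2 * (Xu$p$q * Y$p$q)" for p q by (simp add: YA[of p q])
    have "(\<Sum>c\<in>UNIV. Zl Xu a c * Zl Y b2 c) = (if a = b2 then (\<Sum>p\<in>UNIV. \<Sum>q\<in>UNIV. 2 * (Xu$p$q * Y$p$q)) else 0)
       - (\<Sum>q\<in>UNIV. 2 * (Xu$b2$q * Y$a$q)) + (\<Sum>p\<in>UNIV. - 2 * (Xu$b2$p * Y$a$p))"
      unfolding levi_LC0[rule_format] b1 b2 b3 ..
    also have "\<dots> = (if a = b2 then 2 * S0 else 0) - 4 * (\<Sum>q\<in>UNIV. Xu$b2$q * Y$a$q)"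
      unfolding S0_def sum_distrib_left[symmetric] by simp
    finally show ?thesis .
  qed
  have h6: "(\<Sum>b2\<in>UNIV. gm$b$b2 * (\<Sum>q\<in>UNIV. Xu$b2$q * Y$a$q)) = (\<Sum>c\<in>UNIV. \<Sum>d\<in>UNIV. Y$a$c * gi $c$d * X$b$d)"
  proof -
    have "(\<Sum>b2\<in>UNIV. gm$b$b2 * (\<Sum>q\<in>UNIV. Xu$b2$q * Y$a$q))
       = (\<Sum>b2\<in>UNIV. \<Sum>q\<in>UNIV. \<Sum>e\<in>UNIV. \<Sum>f\<in>UNIV. gm$b$b2 * gi$b2$e * (Y$a$q * gi$q$f * X$e$f))"
      by (simp add: Xu_def sum_distrib_left sum_distrib_right mult_ac)
    also have "\<dots> = (\<Sum>q\<in>UNIV. \<Sum>b2\<in>UNIV. \<Sum>e\<in>UNIV. \<Sum>f\<in>UNIV. gm$b$b2 * gi$b2$e * (Y$a$q * gi$q$f * X$e$f))"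
      by (rule sum.swap)
    also have "\<dots> = (\<Sum>q\<in>UNIV. \<Sum>e\<in>UNIV. \<Sum>b2\<in>UNIV. \<Sum>f\<in>UNIV. gm$b$b2 * gi$b2$e * (Y$a$q * gi$q$f * X$e$f))"
      by (rule sum.cong[OF refl], rule sum.swap)
    also have "\<dots> = (\<Sum>q\<in>UNIV. \<Sum>e\<in>UNIV. \<Sum>f\<in>UNIV. \<Sum>b2\<in>UNIV. gm$b$b2 * gi$b2$e * (Y$a$q * gi$q$f * X$e$f))"
      by (rule sum.cong[OF refl], rule sum.cong[OF refl], rule sum.swap)
    also have "\<dots> = (\<Sum>q\<in>UNIV. \<Sum>e\<in>UNIV. (\<Sum>b2\<in>UNIV. gm$b$b2 * gi$b2$e) * (\<Sum>f\<in>UNIV. Y$a$q * gi$q$f * X$e$f))"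
      by (simp add: sum_distrib_right sum_distrib_left mult.assoc)
    also have "\<dots> = (\<Sum>c\<in>UNIV. \<Sum>d\<in>UNIV. Y$a$c * gi $c$d * X$b$d)"
      by (simp only: gmgi delta_sum)
    finally show ?thesis .
  qed
  have h7: "S0 = (\<Sum>c\<in>UNIV. \<Sum>d\<in>UNIV. \<Sum>e\<in>UNIV. \<Sum>f\<in>UNIV. gi $c$e * gi $d$f * X$c$d * Y$e$f)"
  proof -
    have "S0 = (\<Sum>p\<in>UNIV. \<Sum>q\<in>UNIV. \<Sum>e\<in>UNIV. \<Sum>f\<in>UNIV. gi$p$e * gi$q$f * X$e$f * Y$p$q)"
      by (simp add: S0_def Xu_def sum_distrib_right)
    also have "\<dots> = (\<Sum>e\<in>UNIV. \<Sum>f\<in>UNIV. \<Sum>p\<in>UNIV. \<Sum>q\<in>UNIV. gi$p$e * gi$q$f * X$e$f * Y$p$q)"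
      by (rule swap22)
    also have "\<dots> = (\<Sum>c\<in>UNIV. \<Sum>d\<in>UNIV. \<Sum>e\<in>UNIV. \<Sum>f\<in>UNIV. gi $c$e * gi $d$f * X$c$d * Y$e$f)"
    proof (intro sum.cong refl)
      fix e f p q
      show "gi$p$e * gi$q$f * X$e$f * Y$p$q = gi $e$p * gi $f$q * X$e$f * Y$p$q"
        by (simp add: gis[of p e] gis[of q f])
    qed
    finally show ?thesis .
  qed
  have "(\<Sum>c\<in>UNIV. \<Sum>d\<in>UNIV. hodge gm s X $a$c * gi $c$d * hodge gm s Y $b$d)
     = - 1/4 * (\<Sum>b2\<in>UNIV. gm$b$b2 * ((if a = b2 then 2 * S0 else 0) - 4 * (\<Sum>q\<in>UNIV. Xu$b2$q * Y$a$q)))"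
    unfolding h4 h5 br ..
  also have "\<dots> = - 1/2 * gm$b$a * S0 + (\<Sum>b2\<in>UNIV. gm$b$b2 * (\<Sum>q\<in>UNIV. Xu$b2$q * Y$a$q))"
  proof -
    have e1: "(\<Sum>b2\<in>UNIV. gm$b$b2 * (4 * (\<Sum>q\<in>UNIV. Xu$b2$q * Y$a$q))) = 4 * (\<Sum>b2\<in>UNIV. gm$b$b2 * (\<Sum>q\<in>UNIV. Xu$b2$q * Y$a$q))"
      by (simp add: sum_distrib_left mult_ac)
    show ?thesis
      by (simp add: right_diff_distrib sum_subtractf e1 if_distrib[of "\<lambda>x. _ * x"] cong: if_cong)
  qed
  finally show ?thesis unfolding h6 h7 gi_def by (simp add: gms[of b a])
qed

section \<open>small matrix algebra\<close>

lemma mneg_left [simp]: "(- A) ** (B :: 'a::ring_1^'n^'m) = - (A ** B)"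
  by (simp add: vec_eq_iff matrix_matrix_mult_def sum_negf)
lemma mneg_right [simp]: "(A :: 'a::ring_1^'n^'k) ** (- B) = - (A ** B)"
  by (simp add: vec_eq_iff matrix_matrix_mult_def sum_negf)
lemma madd_rdistrib: "((A + B) ** (C :: 'a::ring_1^'n^'m)) = A ** C + B ** C"
  by (simp add: vec_eq_iff matrix_matrix_mult_def sum.distrib ring_distribs)
lemma mdiff_rdistrib: "((A - B) ** (C :: 'a::ring_1^'n^'m)) = A ** C - B ** C"
  by (simp add: vec_eq_iff matrix_matrix_mult_def sum_subtractf ring_distribs)
lemma mdiff_ldistrib: "((C :: 'a::ring_1^'n^'m) ** (A - B)) = C ** A - C ** B"
  by (simp add: vec_eq_iff matrix_matrix_mult_def sum_subtractf ring_distribs)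
lemma transpose_neg [simp]: "transpose (- A) = - transpose (A :: 'a::ring_1^'n^'m)"
  by (simp add: vec_eq_iff transpose_def)
lemma transpose_add [simp]: "transpose (A + B) = transpose A + transpose (B :: 'a::ring_1^'n^'m)"
  by (simp add: vec_eq_iff transpose_def)
lemma transpose_diff [simp]: "transpose (A - B) = transpose A - transpose (B :: 'a::ring_1^'n^'m)"
  by (simp add: vec_eq_iff transpose_def)
lemma transpose_zero [simp]: "transpose (0 :: 'a::ring_1^'n^'m) = 0"
  by (simp add: vec_eq_iff transpose_def)

lemma sum_plus:
  fixes f :: "('a::finite + 'b::finite) \<Rightarrow> 'c::comm_monoid_add"
  shows "(\<Sum>k\<in>UNIV. f k) = (\<Sum>a\<in>UNIV. f (Inl a)) + (\<Sum>b\<in>UNIV. f (Inr b))"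
  using sum.Plus[of "UNIV::'a set" "UNIV::'b set" f] by (simp add: o_def)

section \<open>block matrices\<close>

definition blk :: "real^'v^'v \<Rightarrow> real^'v^'v \<Rightarrow> real^'v^'v \<Rightarrow> real^'v^'v \<Rightarrow> real^('v::finite + 'v)^('v + 'v)" where
  "blk A B C D = (\<chi> i j. case i of Inl a \<Rightarrow> (case j of Inl b \<Rightarrow> A$a$b | Inr b \<Rightarrow> B$a$b)
     | Inr a \<Rightarrow> (case j of Inl b \<Rightarrow> C$a$b | Inr b \<Rightarrow> D$a$b))"

lemma blk_comp [simp]:
  "blk A B C D $ Inl a $ Inl b = A$a$b" "blk A B C D $ Inl a $ Inr b = B$a$b"
  "blk A B C D $ Inr a $ Inl b = C$a$b" "blk A B C D $ Inr a $ Inr b = D$a$b"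
  by (simp_all add: blk_def)

lemma mat_eq_sum:
  fixes M N :: "real^('v::finite + 'v)^('v + 'v)"
  assumes "\<And>a b. M$Inl a$Inl b = N$Inl a$Inl b" "\<And>a b. M$Inl a$Inr b = N$Inl a$Inr b"
    "\<And>a b. M$Inr a$Inl b = N$Inr a$Inl b" "\<And>a b. M$Inr a$Inr b = N$Inr a$Inr b"
  shows "M = N"
proof -
  have "M$i$j = N$i$j" for i j using assms by (cases i; cases j) auto
  then show ?thesis by (simp add: vec_eq_iff)
qed

definition "ul M = (\<chi> a b. M$Inl a$Inl b)"
definition "ur M = (\<chi> a b. M$Inl a$Inr b)"
definition "ll M = (\<chi> a b. M$Inr a$Inl b)"
definition "lr M = (\<chi> a b. M$Inr a$Inr b)"

lemma blk_split: "M = blk (ul M) (ur M) (ll M) (lr M)"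
  by (rule mat_eq_sum) (simp_all add: ul_def ur_def ll_def lr_def)

lemma blk_eq: "blk A B C D = blk A' B' C' D' \<longleftrightarrow> A = A' \<and> B = B' \<and> C = C' \<and> D = D'"
proof
  assume h: "blk A B C D = blk A' B' C' D'"
  have "A$a$b = A'$a$b \<and> B$a$b = B'$a$b \<and> C$a$b = C'$a$b \<and> D$a$b = D'$a$b" for a b
    using arg_cong[OF h, of "\<lambda>M. M$Inl a$Inl b"] arg_cong[OF h, of "\<lambda>M. M$Inl a$Inr b"]
      arg_cong[OF h, of "\<lambda>M. M$Inr a$Inl b"] arg_cong[OF h, of "\<lambda>M. M$Inr a$Inr b"] by simp
  then show "A = A' \<and> B = B' \<and> C = C' \<and> D = D'" by (simp add: vec_eq_iff)
qed simp

lemma blk_mult: "blk A B C D ** blk A' B' C' D' =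
   blk (A ** A' + B ** C') (A ** B' + B ** D') (C ** A' + D ** C') (C ** B' + D ** D')"
  by (rule mat_eq_sum) (simp_all add: matrix_matrix_mult_def sum_plus)

lemma blk_transpose: "transpose (blk A B C D) = blk (transpose A) (transpose C) (transpose B) (transpose D)"
  by (rule mat_eq_sum) (simp_all add: transpose_def)

lemma blk_neg: "- blk A B C D = blk (-A) (-B) (-C) (-D)"
  by (rule mat_eq_sum) simp_all

lemma blk_mat1: "(mat 1 :: real^('v::finite + 'v)^('v + 'v)) = blk (mat 1) 0 0 (mat 1)"
  by (rule mat_eq_sum) (simp_all add: mat_def)

lemma symp_blk: "(symp_mat :: real^('v::finite + 'v)^('v + 'v)) = blk 0 (- mat 1) (mat 1) 0"
  by (rule mat_eq_sum) (simp_all add: symp_mat_def mat_def)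

lemma gamma_blk: "gamma_mat R I = blk (- (matrix_inv I ** R)) (matrix_inv I) (- I - R ** matrix_inv I ** R) (R ** matrix_inv I)"
  by (rule mat_eq_sum) (simp_all add: gamma_mat_def Let_def)

lemma mv_axis: "((A::real^'n^'m) *v axis j 1) $ i = A$i$j"
  by (simp add: matrix_vector_mult_def axis_def if_distrib[of "\<lambda>x. _ * x"] cong: if_cong)

lemma form_eq:
  fixes A B :: "real^'n^'m"
  assumes "\<And>x y. x \<bullet> (A *v y) = x \<bullet> (B *v y)"
  shows "A = B"
proof -
  have "A$i$j = B$i$j" for i j
    using assms[of "axis i 1" "axis j 1"] by (simp add: inner_axis' mv_axis)
  then show ?thesis by (simp add: vec_eq_iff)
qed

lemma inner_mv_transpose: "((M::real^'n^'m) *v x) \<bullet> y = x \<bullet> (transpose M *v y)"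
  by (metis dot_lmul_matrix inner_commute transpose_matrix_vector)

lemma symp_form_M: "symp_form (M *v \<xi>) (M *v \<eta>) = \<xi> \<bullet> ((transpose M ** symp_mat ** M) *v \<eta>)"
  unfolding symp_form_def inner_mv_transpose by (simp add: matrix_vector_mul_assoc matrix_mul_assoc)

lemma symp_pres_mat:
  assumes "\<forall>\<xi> \<eta>. symp_form (M *v \<xi>) (M *v \<eta>) = symp_form \<xi> \<eta>"
  shows "transpose M ** symp_mat ** M = symp_mat"
proof (rule form_eq)
  fix x y
  have "symp_form (M *v x) (M *v y) = symp_form x y" using assms by blast
  then show "x \<bullet> ((transpose M ** symp_mat ** M) *v y) = x \<bullet> (symp_mat *v y)"
    unfolding symp_form_M by (simp add: symp_form_def)
qed

lemma pd_inv:
  assumes "pos_def_mat (M::real^'n^'n)"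
  shows "invertible M"
proof -
  have "inj ((*v) M)"
  proof (rule injI)
    fix x y assume "M *v x = M *v y"
    then have "M *v (x - y) = 0" by (simp add: matrix_vector_mult_diff_distrib)
    then show "x = y" using assms unfolding pos_def_mat_def by (metis inner_zero_right less_irrefl right_minus_eq)
  qed
  then show ?thesis using matrix_left_invertible_injective invertible_left_inverse by blast
qed

lemma minv_minv:
  assumes "invertible (A::real^'n^'n)"
  shows "matrix_inv (matrix_inv A) = A"
  using minv_unique[OF minv(2)[OF assms] minv(1)[OF assms]] .

lemma minv_invertible:
  assumes "invertible (A::real^'n^'n)"
  shows "invertible (matrix_inv A)"
  using minv[OF assms] unfolding invertible_def by blast

lemma tame_gamma_ex:
  fixes J :: "real^('v::finite+'v)^('v+'v)"
  assumes "tame_cs J"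
  shows "\<exists>R I. transpose R = R \<and> transpose I = I \<and> pos_def_mat I \<and> gamma_mat R I = J"
proof -
  define a where "a = ul J"
  define b where "b = ur J"
  define c where "c = ll J"
  define d where "d = lr J"
  have Jb: "J = blk a b c d" unfolding a_def b_def c_def d_def by (rule blk_split)
  have JJ: "J ** J = - mat 1" using assms unfolding tame_cs_def by blast
  have om: "transpose J ** symp_mat ** J = symp_mat"
    using assms unfolding tame_cs_def by (intro symp_pres_mat) blast
  have tam: "\<And>\<xi>. \<xi> \<noteq> 0 \<Longrightarrow> symp_form \<xi> (J *v \<xi>) > 0" using assms unfolding tame_cs_def by blast
  have E: "a**a + b**c = - mat 1" "a**b + b**d = 0" "c**a + d**c = 0" "c**b + d**d = - mat 1"
    using JJ unfolding Jb blk_mult blk_mat1 blk_neg blk_eq by simp_all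
  have OJ: "symp_mat ** J = blk (-c) (-d) a b" unfolding Jb symp_blk blk_mult by simp
  have OJsym: "transpose (symp_mat ** J) = symp_mat ** J"
  proof -
    have tO: "transpose (symp_mat :: real^('v+'v)^('v+'v)) = - symp_mat"
      by (simp add: symp_blk blk_transpose blk_neg)
    have JnJ: "J ** (- J) = mat 1" using JJ by simp
    have "transpose J ** symp_mat = (transpose J ** symp_mat ** J) ** (-J)"
      by (simp only: matrix_mul_assoc[symmetric] JnJ matrix_mul_rid)
    then have "transpose J ** symp_mat = - (symp_mat ** J)" using om by simp
    then show ?thesis by (simp add: matrix_transpose_mul tO)
  qed
  then have S: "transpose a = -d" "transpose b = b" "transpose c = c"
    unfolding OJ blk_transpose blk_eq by simp_all
  have bpd: "pos_def_mat b"
    unfolding pos_def_mat_def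
  proof (intro allI impI)
    fix y :: "real^'v" assume y: "y \<noteq> 0"
    define \<xi> :: "real^('v+'v)" where "\<xi> = (\<chi> k. case k of Inl _ \<Rightarrow> 0 | Inr i \<Rightarrow> y$i)"
    have "\<xi> \<noteq> 0"
    proof
      assume "\<xi> = 0"
      then have "\<xi>$Inr i = 0" for i by simp
      then have "y$i = 0" for i by (simp add: \<xi>_def)
      then show False using y by (simp add: vec_eq_iff)
    qed
    then have "symp_form \<xi> (J *v \<xi>) > 0" by (rule tam)
    moreover have "symp_form \<xi> (J *v \<xi>) = y \<bullet> (b *v y)"
      unfolding symp_form_def matrix_vector_mul_assoc OJ
      by (simp add: inner_vec_def matrix_vector_mult_def sum_plus \<xi>_def)
    ultimately show "y \<bullet> (b *v y) > 0" by simp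
  qed
  have binv: "invertible b" using pd_inv[OF bpd] .
  define I where "I = matrix_inv b"
  define R where "R = - (I ** a)"
  have Ib: "I ** b = mat 1" "b ** I = mat 1" using minv[OF binv] unfolding I_def by simp_all
  have Is: "transpose I = I" unfolding I_def using minv_sym[OF binv S(2)] .
  have dI: "d ** I = - (I ** a)"
  proof -
    have 1: "I ** (a ** b + b ** d) ** I = 0" using E(2) by simp
    have 2: "I ** (a ** b + b ** d) ** I = I ** a ** (b ** I) + (I ** b) ** d ** I"
      by (simp only: matrix_add_ldistrib madd_rdistrib matrix_mul_assoc)
    have "I ** a + d ** I = 0" using 1 2 Ib by simp
    then show ?thesis using minus_unique by metis
  qed
  have Rs: "transpose R = R"
    unfolding R_def by (simp add: matrix_transpose_mul S(1) Is dI)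
  have Ipd: "pos_def_mat I"
    unfolding pos_def_mat_def
  proof (intro allI impI)
    fix x :: "real^'v" assume x: "x \<noteq> 0"
    define y where "y = I *v x"
    have xy: "x = b *v y" unfolding y_def by (simp add: matrix_vector_mul_assoc Ib)
    have "y \<noteq> 0"
    proof
      assume "y = 0"
      then have "x = 0" using xy by simp
      then show False using x by simp
    qed
    then have "y \<bullet> (b *v y) > 0" using bpd unfolding pos_def_mat_def by blast
    moreover have "x \<bullet> (I *v x) = y \<bullet> (b *v y)"
    proof -
      have "x \<bullet> (I *v x) = x \<bullet> y" unfolding y_def ..
      also have "\<dots> = (b *v y) \<bullet> y" by (subst xy) (rule refl)
      finally show ?thesis by (simp add: inner_commute)
    qed
    ultimately show "x \<bullet> (I *v x) > 0" by simp
  qed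
  have Ii: "matrix_inv I = b" using minv_unique[OF Ib] .
  have RdI: "R = d ** I" unfolding R_def dI ..
  have ab: "a ** b = - (b ** d)" using E(2) by (simp add: eq_neg_iff_add_eq_0)
  have g1: "- (b ** R) = a" unfolding R_def by (simp add: matrix_mul_assoc Ib)
  have g4: "R ** b = d" unfolding R_def
    by (simp add: matrix_mul_assoc[symmetric] ab) (simp add: matrix_mul_assoc Ib)
  have cb: "c ** b = - mat 1 - d ** d" using E(4) by (simp add: eq_diff_eq)
  have g3: "- I - R ** b ** R = c"
  proof -
    have "c = c ** b ** I" by (simp add: matrix_mul_assoc[symmetric] Ib)
    also have "\<dots> = (- mat 1 - d ** d) ** I" by (simp add: cb)
    also have "\<dots> = - I - d ** d ** I" by (simp add: mdiff_rdistrib)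
    also have "\<dots> = - I - R ** b ** R"
    proof -
      have "R ** b ** R = d ** R" by (simp add: g4)
      also have "\<dots> = d ** d ** I" by (simp add: RdI matrix_mul_assoc)
      finally show ?thesis by simp
    qed
    finally show ?thesis by simp
  qed
  have "gamma_mat R I = J" unfolding gamma_blk Ii unfolding g3 unfolding g1 g4 Jb ..
  then show ?thesis using Rs Is Ipd by blast
qed

lemma gamma_unique:
  fixes R1 I1 R2 I2 :: "real^'v::finite^'v"
  assumes "pos_def_mat I1" "pos_def_mat I2" "gamma_mat R1 I1 = gamma_mat R2 I2"
  shows "R1 = R2 \<and> I1 = I2"
proof -
  have i1: "invertible I1" and i2: "invertible I2" using pd_inv assms by auto
  have e0: "- (matrix_inv I1 ** R1) = - (matrix_inv I2 ** R2) \<and> matrix_inv I1 = matrix_inv I2"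
    using assms(3) unfolding gamma_blk blk_eq by blast
  then have e: "matrix_inv I1 ** R1 = matrix_inv I2 ** R2" "matrix_inv I1 = matrix_inv I2"
    using neg_equal_iff_equal by blast+
  have II: "I1 = I2" using minv_minv[OF i1] minv_minv[OF i2] e(2) by metis
  have "I1 ** (matrix_inv I1 ** R1) = I1 ** (matrix_inv I1 ** R2)" using e II by simp
  then have "R1 = R2" by (simp add: matrix_mul_assoc minv[OF i1])
  then show ?thesis using II by simp
qed

lemma gamma_inv_prop:
  fixes J :: "real^('v::finite+'v)^('v+'v)"
  assumes "tame_cs J"
  shows "transpose (fst (gamma_inv J)) = fst (gamma_inv J) \<and> transpose (snd (gamma_inv J)) = snd (gamma_inv J)
    \<and> pos_def_mat (snd (gamma_inv J)) \<and> gamma_mat (fst (gamma_inv J)) (snd (gamma_inv J)) = J"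
proof -
  define P where "P = (\<lambda>p. case p of (R, I) \<Rightarrow>
      transpose R = R \<and> transpose I = I \<and> pos_def_mat I \<and> gamma_mat R I = J)"
  obtain R I where RI: "transpose R = R \<and> transpose I = I \<and> pos_def_mat I \<and> gamma_mat R I = J"
    using tame_gamma_ex[OF assms] by blast
  have ex1: "\<exists>!p. P p"
  proof
    show "P (R, I)" using RI unfolding P_def by simp
  next
    fix p assume "P p"
    then show "p = (R, I)" using RI gamma_unique unfolding P_def by (cases p) fastforce
  qed
  have "P (gamma_inv J)" using theI'[OF ex1] unfolding gamma_inv_def P_def .
  then show ?thesis unfolding P_def by (cases "gamma_inv J") simp
qed

definition Cf :: "real^'n^'n \<Rightarrow> 'n \<Rightarrow> 'n \<Rightarrow> real^'n^'n \<Rightarrow> real^'n^'n \<Rightarrow> real" where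
  "Cf gi a b X Y = (\<Sum>c\<in>UNIV. \<Sum>d\<in>UNIV. X$a$c * gi$c$d * Y$b$d)"

definition FFf :: "real^'n^'n \<Rightarrow> real^'n^'n \<Rightarrow> real^'n^'n \<Rightarrow> real" where
  "FFf gi X Y = (\<Sum>c\<in>UNIV. \<Sum>d\<in>UNIV. \<Sum>e\<in>UNIV. \<Sum>f\<in>UNIV. gi$c$e * gi$d$f * X$c$d * Y$e$f)"

lemma Cf_lin_left: "Cf gi a b (\<Sum>m\<in>UNIV. c m *\<^sub>R Z m) Y = (\<Sum>m\<in>UNIV. c m * Cf gi a b (Z m) Y)"
proof -
  have "Cf gi a b (\<Sum>m\<in>UNIV. c m *\<^sub>R Z m) Y = (\<Sum>e\<in>UNIV. \<Sum>d\<in>UNIV. \<Sum>m\<in>UNIV. c m * (Z m$a$e * gi$e$d * Y$b$d))"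
    by (simp add: Cf_def sum_component sum_distrib_left sum_distrib_right; simp add: mult_ac)
  also have "\<dots> = (\<Sum>m\<in>UNIV. \<Sum>e\<in>UNIV. \<Sum>d\<in>UNIV. c m * (Z m$a$e * gi$e$d * Y$b$d))"
    by (rule out2)
  also have "\<dots> = (\<Sum>m\<in>UNIV. c m * Cf gi a b (Z m) Y)"
    by (simp add: Cf_def sum_distrib_left)
  finally show ?thesis .
qed

lemma Cf_lin_right: "Cf gi a b X (\<Sum>m\<in>UNIV. c m *\<^sub>R Z m) = (\<Sum>m\<in>UNIV. c m * Cf gi a b X (Z m))"
proof -
  have "Cf gi a b X (\<Sum>m\<in>UNIV. c m *\<^sub>R Z m) = (\<Sum>e\<in>UNIV. \<Sum>d\<in>UNIV. \<Sum>m\<in>UNIV. c m * (X$a$e * gi$e$d * Z m$b$d))"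
    by (simp add: Cf_def sum_component sum_distrib_left sum_distrib_right; simp add: mult_ac)
  also have "\<dots> = (\<Sum>m\<in>UNIV. \<Sum>e\<in>UNIV. \<Sum>d\<in>UNIV. c m * (X$a$e * gi$e$d * Z m$b$d))"
    by (rule out2)
  also have "\<dots> = (\<Sum>m\<in>UNIV. c m * Cf gi a b X (Z m))"
    by (simp add: Cf_def sum_distrib_left)
  finally show ?thesis .
qed

lemma bil_transfer:
  fixes Q T :: "real^'k::finite^'k"
  shows "(\<Sum>k\<in>UNIV. \<Sum>l\<in>UNIV. Q$k$l * Cf gi a b (\<Sum>m\<in>UNIV. T$k$m *\<^sub>R Z m) (\<Sum>n\<in>UNIV. T$l$n *\<^sub>R Z n))
       = (\<Sum>m\<in>UNIV. \<Sum>n\<in>UNIV. (transpose T ** Q ** T)$m$n * Cf gi a b (Z m) (Z n))"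
proof -
  have "(\<Sum>k\<in>UNIV. \<Sum>l\<in>UNIV. Q$k$l * Cf gi a b (\<Sum>m\<in>UNIV. T$k$m *\<^sub>R Z m) (\<Sum>n\<in>UNIV. T$l$n *\<^sub>R Z n))
     = (\<Sum>k\<in>UNIV. \<Sum>l\<in>UNIV. \<Sum>n\<in>UNIV. \<Sum>m\<in>UNIV. (T$k$m * Q$k$l * T$l$n) * Cf gi a b (Z m) (Z n))"
    by (simp add: Cf_lin_left Cf_lin_right sum_distrib_left sum_distrib_right mult_ac)
  also have "\<dots> = (\<Sum>k\<in>UNIV. \<Sum>l\<in>UNIV. \<Sum>m\<in>UNIV. \<Sum>n\<in>UNIV. (T$k$m * Q$k$l * T$l$n) * Cf gi a b (Z m) (Z n))"
    by (rule sum.cong[OF refl], rule sum.cong[OF refl], rule sum.swap)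
  also have "\<dots> = (\<Sum>m\<in>UNIV. \<Sum>n\<in>UNIV. \<Sum>k\<in>UNIV. \<Sum>l\<in>UNIV. (T$k$m * Q$k$l * T$l$n) * Cf gi a b (Z m) (Z n))"
    by (rule swap22)
  also have "\<dots> = (\<Sum>m\<in>UNIV. \<Sum>n\<in>UNIV. (\<Sum>k\<in>UNIV. \<Sum>l\<in>UNIV. T$k$m * Q$k$l * T$l$n) * Cf gi a b (Z m) (Z n))"
    by (simp add: sum_distrib_right)
  also have "\<dots> = (\<Sum>m\<in>UNIV. \<Sum>n\<in>UNIV. (transpose T ** Q ** T)$m$n * Cf gi a b (Z m) (Z n))"
  proof -
    have "(transpose T ** Q ** T)$m$n = (\<Sum>k\<in>UNIV. \<Sum>l\<in>UNIV. T$k$m * Q$k$l * T$l$n)" for m n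
    proof -
      have "(transpose T ** Q ** T)$m$n = (\<Sum>l\<in>UNIV. \<Sum>k\<in>UNIV. T$k$m * Q$k$l * T$l$n)"
        by (simp add: mat_mul_comp transpose_def sum_distrib_right)
      also have "\<dots> = (\<Sum>k\<in>UNIV. \<Sum>l\<in>UNIV. T$k$m * Q$k$l * T$l$n)" by (rule sum.swap)
      finally show ?thesis .
    qed
    then show ?thesis by simp
  qed
  finally show ?thesis .
qed

lemma vsum_mat:
  fixes A :: "real^'k::finite^'k" and B :: "real^'k^'k" and X :: "'k \<Rightarrow> 'x::real_vector"
  shows "(\<Sum>S\<in>UNIV. A$L$S *\<^sub>R (\<Sum>S'\<in>UNIV. B$S$S' *\<^sub>R X S')) = (\<Sum>S'\<in>UNIV. (A ** B)$L$S' *\<^sub>R X S')"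
proof -
  have "(\<Sum>S\<in>UNIV. A$L$S *\<^sub>R (\<Sum>S'\<in>UNIV. B$S$S' *\<^sub>R X S')) = (\<Sum>S\<in>UNIV. \<Sum>S'\<in>UNIV. (A$L$S * B$S$S') *\<^sub>R X S')"
    by (simp add: scaleR_sum_right)
  also have "\<dots> = (\<Sum>S'\<in>UNIV. \<Sum>S\<in>UNIV. (A$L$S * B$S$S') *\<^sub>R X S')" by (rule sum.swap)
  also have "\<dots> = (\<Sum>S'\<in>UNIV. (A ** B)$L$S' *\<^sub>R X S')"
    by (simp add: mat_mul_comp scaleR_sum_left)
  finally show ?thesis .
qed

lemma vsum_mat1:
  fixes X :: "'k::finite \<Rightarrow> 'x::real_vector"
  shows "(\<Sum>S\<in>UNIV. (mat 1 :: real^'k^'k)$L$S *\<^sub>R X S) = X L"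
  by (simp add: mat_def if_distrib[of "\<lambda>c. c *\<^sub>R _"] cong: if_cong)

lemma vsum_zero:
  fixes X :: "'k::finite \<Rightarrow> 'x::real_vector"
  shows "(\<Sum>S\<in>UNIV. (0 :: real^'k^'k)$L$S *\<^sub>R X S) = 0"
  by simp

lemma field_K:
  fixes gx :: "real^4^4" and s :: real and Jm :: "real^('v::finite+'v)^('v+'v)"
    and R I :: "real^'v^'v" and W :: "'v + 'v \<Rightarrow> real^4^4"
  assumes gs: "transpose gx = gx" and gd: "det gx < 0" and s: "s = 1 \<or> s = -1"
    and Rs: "transpose R = R" and Is: "transpose I = I" and Ipd: "pos_def_mat I"
    and gam: "gamma_mat R I = Jm"
    and Wa: "\<And>k. transpose (W k) = - W k"
    and hc: "\<And>k. hodge gx s (W k) = - (\<Sum>l\<in>UNIV. Jm$k$l *\<^sub>R W l)"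
  shows "2 * (\<Sum>L\<in>UNIV. \<Sum>S\<in>UNIV. I$L$S * Cf (matrix_inv gx) a b (W (Inl L)) (W (Inl S)))
      - 1/2 * gx$a$b * (\<Sum>L\<in>UNIV. \<Sum>S\<in>UNIV. I$L$S * FFf (matrix_inv gx) (W (Inl L)) (W (Inl S)))
    = (\<Sum>k\<in>UNIV. \<Sum>l\<in>UNIV. (symp_mat ** Jm)$k$l * Cf (matrix_inv gx) a b (W k) (W l))"
proof -
  define gi where "gi = matrix_inv gx"
  define Ii where "Ii = matrix_inv I"
  have Iinv: "invertible I" using pd_inv[OF Ipd] .
  have IIi: "I ** Ii = mat 1" "Ii ** I = mat 1" using minv[OF Iinv] unfolding Ii_def by simp_all
  define F where "F = (\<lambda>L. W (Inl L))"
  define G where "G = (\<lambda>L. W (Inr L))"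
  define hF where "hF = (\<lambda>L. hodge gx s (F L))"
  have Jb: "Jm = blk (- (Ii ** R)) Ii (- I - R ** Ii ** R) (R ** Ii)"
    using gam unfolding gamma_blk Ii_def by simp
  have k1: "hF L = (\<Sum>S\<in>UNIV. (Ii ** R)$L$S *\<^sub>R F S) - (\<Sum>S\<in>UNIV. Ii$L$S *\<^sub>R G S)" for L
    unfolding hF_def F_def hc by (simp add: sum_plus Jb G_def scaleR_sum_left sum_negf)
  have k2: "G L = (\<Sum>S\<in>UNIV. R$L$S *\<^sub>R F S) - (\<Sum>S\<in>UNIV. I$L$S *\<^sub>R hF S)" for L
  proof -
    have "(\<Sum>S\<in>UNIV. I$L$S *\<^sub>R hF S) = (\<Sum>S\<in>UNIV. I$L$S *\<^sub>R (\<Sum>S'\<in>UNIV. (Ii ** R)$S$S' *\<^sub>R F S'))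
        - (\<Sum>S\<in>UNIV. I$L$S *\<^sub>R (\<Sum>S'\<in>UNIV. Ii$S$S' *\<^sub>R G S'))"
      by (simp add: k1 scaleR_diff_right sum_subtractf)
    also have "\<dots> = (\<Sum>S'\<in>UNIV. (I ** (Ii ** R))$L$S' *\<^sub>R F S') - (\<Sum>S'\<in>UNIV. (I ** Ii)$L$S' *\<^sub>R G S')"
      by (simp only: vsum_mat)
    also have "\<dots> = (\<Sum>S'\<in>UNIV. R$L$S' *\<^sub>R F S') - G L"
      by (simp only: matrix_mul_assoc IIi matrix_mul_lid vsum_mat1)
    finally show ?thesis by simp
  qed
  define T :: "real^('v+'v)^('v+'v)" where "T = blk (mat 1) 0 R (- I)"
  define Z where "Z = (\<lambda>m. case m of Inl L \<Rightarrow> F L | Inr L \<Rightarrow> hF L)"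
  have k3: "W k = (\<Sum>m\<in>UNIV. T$k$m *\<^sub>R Z m)" for k
  proof (cases k)
    case (Inl L)
    then show ?thesis by (simp add: sum_plus T_def Z_def vsum_mat1 F_def)
  next
    case (Inr L)
    then show ?thesis using k2[of L] by (simp add: sum_plus T_def Z_def G_def scaleR_sum_left[symmetric] sum_negf)
  qed
  have k4: "transpose T ** (symp_mat ** Jm) ** T = blk I 0 0 I"
  proof -
    have OJ: "symp_mat ** Jm = blk (I + R ** Ii ** R) (- (R ** Ii)) (- (Ii ** R)) Ii"
      unfolding symp_blk Jb blk_mult by (simp add: add.commute)
    have tT: "transpose T = blk (mat 1) R 0 (- I)" unfolding T_def blk_transpose by (simp add: Rs Is)
    have "transpose T ** (symp_mat ** Jm) = blk I 0 R (- mat 1)"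
      unfolding tT OJ blk_mult by (simp add: matrix_mul_assoc IIi)
    then show ?thesis unfolding T_def by (simp add: blk_mult)
  qed
  have Isym: "I$S$L = I$L$S" for L S
  proof -
    have "(transpose I)$L$S = I$L$S" using Is by simp
    then show ?thesis by (simp add: transpose_def)
  qed
  have hq: "Cf gi a b (hF L) (hF S) = Cf gi a b (F S) (F L) - 1/2 * gx$a$b * FFf gi (F L) (F S)" for L S
    unfolding Cf_def FFf_def hF_def gi_def F_def by (rule hodge_quad[OF gs gd s Wa Wa])
  have "(\<Sum>k\<in>UNIV. \<Sum>l\<in>UNIV. (symp_mat ** Jm)$k$l * Cf gi a b (W k) (W l))
     = (\<Sum>k\<in>UNIV. \<Sum>l\<in>UNIV. (symp_mat ** Jm)$k$l * Cf gi a b (\<Sum>m\<in>UNIV. T$k$m *\<^sub>R Z m) (\<Sum>n\<in>UNIV. T$l$n *\<^sub>R Z n))"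
    by (simp only: k3)
  also have "\<dots> = (\<Sum>m\<in>UNIV. \<Sum>n\<in>UNIV. (blk I 0 0 I)$m$n * Cf gi a b (Z m) (Z n))"
    unfolding bil_transfer k4 ..
  also have "\<dots> = (\<Sum>L\<in>UNIV. \<Sum>S\<in>UNIV. I$L$S * Cf gi a b (F L) (F S)) + (\<Sum>L\<in>UNIV. \<Sum>S\<in>UNIV. I$L$S * Cf gi a b (hF L) (hF S))"
    by (simp add: sum_plus Z_def)
  also have "(\<Sum>L\<in>UNIV. \<Sum>S\<in>UNIV. I$L$S * Cf gi a b (hF L) (hF S))
      = (\<Sum>L\<in>UNIV. \<Sum>S\<in>UNIV. I$L$S * Cf gi a b (F S) (F L)) - 1/2 * gx$a$b * (\<Sum>L\<in>UNIV. \<Sum>S\<in>UNIV. I$L$S * FFf gi (F L) (F S))"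
    by (simp add: hq right_diff_distrib sum_subtractf sum_distrib_left mult_ac)
  also have "(\<Sum>L\<in>UNIV. \<Sum>S\<in>UNIV. I$L$S * Cf gi a b (F S) (F L)) = (\<Sum>L\<in>UNIV. \<Sum>S\<in>UNIV. I$L$S * Cf gi a b (F L) (F S))"
  proof -
    have "(\<Sum>L\<in>UNIV. \<Sum>S\<in>UNIV. I$L$S * Cf gi a b (F S) (F L)) = (\<Sum>S\<in>UNIV. \<Sum>L\<in>UNIV. I$L$S * Cf gi a b (F S) (F L))"
      by (rule sum.swap)
    also have "\<dots> = (\<Sum>L\<in>UNIV. \<Sum>S\<in>UNIV. I$L$S * Cf gi a b (F L) (F S))"
      by (simp add: Isym)
    finally show ?thesis .
  qed
  finally show ?thesis unfolding gi_def F_def by simp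
qed

lemma hodge_linear: "linear (hodge gm s)"
proof (rule linearI)
  fix x y :: "real^4^4" and c :: real
  show "hodge gm s (x + y) = hodge gm s x + hodge gm s y"
    by (simp add: hodge_def Let_def vec_eq_iff sum.distrib ring_distribs)
  show "hodge gm s (c *\<^sub>R x) = c *\<^sub>R hodge gm s x"
    by (simp add: hodge_def Let_def vec_eq_iff sum_distrib_left mult_ac)
qed

lemma hodge_sum: "hodge gm s (\<Sum>l\<in>UNIV. c l *\<^sub>R X l) = (\<Sum>l\<in>UNIV. c l *\<^sub>R hodge gm s (X l))"
proof -
  have "hodge gm s (\<Sum>l\<in>UNIV. c l *\<^sub>R X l) = (\<Sum>l\<in>UNIV. hodge gm s (c l *\<^sub>R X l))"
    by (rule linear_sum[OF hodge_linear])
  also have "\<dots> = (\<Sum>l\<in>UNIV. c l *\<^sub>R hodge gm s (X l))"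
    using linear_scale[OF hodge_linear] by simp
  finally show ?thesis .
qed

lemma transpose_sum: "transpose (\<Sum>l\<in>UNIV. c l *\<^sub>R (X l :: real^'n^'n)) = (\<Sum>l\<in>UNIV. c l *\<^sub>R transpose (X l))"
  by (simp add: vec_eq_iff transpose_def sum_component)

lemma Sp_facts:
  assumes "A \<in> Sp"
  shows "invertible A" "transpose A ** symp_mat ** A = symp_mat"
  using assms unfolding Sp_def by (auto intro: symp_pres_mat)

lemma tame_transf:
  fixes J A :: "real^('v::finite+'v)^('v+'v)"
  assumes A: "A \<in> Sp" and J: "tame_cs J"
  shows "tame_cs (A ** J ** matrix_inv A)"
proof -
  define Ai where "Ai = matrix_inv A"
  have Ainv: "invertible A" and AOA: "transpose A ** symp_mat ** A = symp_mat" using Sp_facts[OF A] by auto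
  have AAi: "A ** Ai = mat 1" "Ai ** A = mat 1" using minv[OF Ainv] unfolding Ai_def by auto
  have Jinv: "invertible J" and JJ: "J ** J = - mat 1" and JOJ: "transpose J ** symp_mat ** J = symp_mat"
    and tam: "\<And>\<xi>. \<xi> \<noteq> 0 \<Longrightarrow> symp_form \<xi> (J *v \<xi>) > 0"
    using J unfolding tame_cs_def by (auto intro: symp_pres_mat)
  have AiOAi: "transpose Ai ** symp_mat ** Ai = symp_mat"
  proof -
    have "transpose Ai ** symp_mat ** Ai = transpose Ai ** (transpose A ** symp_mat ** A) ** Ai" by (simp add: AOA)
    also have "\<dots> = transpose (A ** Ai) ** symp_mat ** (A ** Ai)" by (simp add: matrix_transpose_mul matrix_mul_assoc)
    also have "\<dots> = symp_mat" by (simp add: AAi)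
    finally show ?thesis .
  qed
  have inv: "invertible (A ** J ** Ai)"
    using invertible_mult[OF invertible_mult[OF Ainv Jinv] minv_invertible[OF Ainv]] unfolding Ai_def .
  have sq: "(A ** J ** Ai) ** (A ** J ** Ai) = - mat 1"
  proof -
    have "(A ** J ** Ai) ** (A ** J ** Ai) = A ** J ** (Ai ** A) ** J ** Ai" by (simp add: matrix_mul_assoc)
    also have "\<dots> = A ** (J ** J) ** Ai" by (simp add: AAi matrix_mul_assoc)
    also have "\<dots> = - mat 1" by (simp add: JJ AAi)
    finally show ?thesis .
  qed
  have pres: "transpose (A ** J ** Ai) ** symp_mat ** (A ** J ** Ai) = symp_mat"
  proof -
    have "transpose (A ** J ** Ai) ** symp_mat ** (A ** J ** Ai)
       = transpose Ai ** (transpose J ** (transpose A ** symp_mat ** A) ** J) ** Ai"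
      by (simp add: matrix_transpose_mul matrix_mul_assoc)
    also have "\<dots> = symp_mat" by (simp add: AOA JOJ AiOAi)
    finally show ?thesis .
  qed
  have tm: "symp_form \<xi> ((A ** J ** Ai) *v \<xi>) > 0" if "\<xi> \<noteq> 0" for \<xi>
  proof -
    define \<eta> where "\<eta> = Ai *v \<xi>"
    have x: "\<xi> = A *v \<eta>" unfolding \<eta>_def by (simp add: matrix_vector_mul_assoc AAi)
    have "\<eta> \<noteq> 0"
    proof
      assume "\<eta> = 0" then have "\<xi> = 0" using x by simp
      then show False using that by simp
    qed
    then have pos: "symp_form \<eta> (J *v \<eta>) > 0" by (rule tam)
    have "symp_form \<xi> ((A ** J ** Ai) *v \<xi>) = symp_form (A *v \<eta>) (A *v (J *v \<eta>))"
      by (simp add: x matrix_vector_mul_assoc[symmetric] AAi)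
      (simp add: matrix_vector_mul_assoc matrix_mul_assoc AAi)
    also have "\<dots> = symp_form \<eta> (J *v \<eta>)"
      unfolding symp_form_M AOA by (simp add: symp_form_def)
    finally show ?thesis using pos by simp
  qed
  have pres2: "\<forall>\<xi> \<eta>. symp_form ((A ** J ** Ai) *v \<xi>) ((A ** J ** Ai) *v \<eta>) = symp_form \<xi> \<eta>"
    unfolding symp_form_M pres by (simp add: symp_form_def)
  show ?thesis unfolding tame_cs_def Ai_def[symmetric]
    using inv sq tm pres2 by blast
qed

lemma field_inv:
  fixes gx :: "real^4^4" and s :: real and J A :: "real^('v::finite+'v)^('v+'v)"
    and V :: "'v + 'v \<Rightarrow> real^4^4"
  assumes gs: "transpose gx = gx" and gd: "det gx < 0" and s: "s = 1 \<or> s = -1"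
    and A: "A \<in> Sp" and J: "tame_cs J"
    and Va: "\<And>k. transpose (V k) = - V k"
    and hc: "\<And>k. hodge gx s (V k) = - (\<Sum>l\<in>UNIV. J$k$l *\<^sub>R V l)"
  shows "2 * (\<Sum>L\<in>UNIV. \<Sum>S\<in>UNIV. snd (gamma_inv (A ** J ** matrix_inv A))$L$S *
              Cf (matrix_inv gx) a b ((\<Sum>l\<in>UNIV. A$Inl L$l *\<^sub>R V l)) ((\<Sum>l\<in>UNIV. A$Inl S$l *\<^sub>R V l)))
      - 1/2 * gx$a$b * (\<Sum>L\<in>UNIV. \<Sum>S\<in>UNIV. snd (gamma_inv (A ** J ** matrix_inv A))$L$S *
              FFf (matrix_inv gx) ((\<Sum>l\<in>UNIV. A$Inl L$l *\<^sub>R V l)) ((\<Sum>l\<in>UNIV. A$Inl S$l *\<^sub>R V l)))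
    = 2 * (\<Sum>L\<in>UNIV. \<Sum>S\<in>UNIV. snd (gamma_inv J)$L$S * Cf (matrix_inv gx) a b (V (Inl L)) (V (Inl S)))
      - 1/2 * gx$a$b * (\<Sum>L\<in>UNIV. \<Sum>S\<in>UNIV. snd (gamma_inv J)$L$S * FFf (matrix_inv gx) (V (Inl L)) (V (Inl S)))"
proof -
  define Jh where "Jh = A ** J ** matrix_inv A"
  define Vh where "Vh = (\<lambda>k. \<Sum>l\<in>UNIV. A$k$l *\<^sub>R V l)"
  have Ainv: "invertible A" and AOA: "transpose A ** symp_mat ** A = symp_mat" using Sp_facts[OF A] by auto
  have AAi: "A ** matrix_inv A = mat 1" "matrix_inv A ** A = mat 1" using minv[OF Ainv] by auto
  have Jht: "tame_cs Jh" unfolding Jh_def using tame_transf[OF A J] .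
  have P1: "transpose (fst (gamma_inv J)) = fst (gamma_inv J)" "transpose (snd (gamma_inv J)) = snd (gamma_inv J)"
     "pos_def_mat (snd (gamma_inv J))" "gamma_mat (fst (gamma_inv J)) (snd (gamma_inv J)) = J"
    using gamma_inv_prop[OF J] by auto
  have P2: "transpose (fst (gamma_inv Jh)) = fst (gamma_inv Jh)" "transpose (snd (gamma_inv Jh)) = snd (gamma_inv Jh)"
     "pos_def_mat (snd (gamma_inv Jh))" "gamma_mat (fst (gamma_inv Jh)) (snd (gamma_inv Jh)) = Jh"
    using gamma_inv_prop[OF Jht] by auto
  have Vha: "transpose (Vh k) = - Vh k" for k
    unfolding Vh_def transpose_sum Va by (simp add: sum_negf)
  have JhA: "Jh ** A = A ** J" unfolding Jh_def by (simp add: matrix_mul_assoc[symmetric] AAi)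
  have hch: "hodge gx s (Vh k) = - (\<Sum>l\<in>UNIV. Jh$k$l *\<^sub>R Vh l)" for k
  proof -
    have "hodge gx s (Vh k) = (\<Sum>l\<in>UNIV. A$k$l *\<^sub>R (- (\<Sum>m\<in>UNIV. J$l$m *\<^sub>R V m)))"
      unfolding Vh_def hodge_sum hc ..
    also have "\<dots> = - (\<Sum>m\<in>UNIV. (A ** J)$k$m *\<^sub>R V m)"
      by (simp only: scaleR_minus_right sum_negf vsum_mat)
    also have "\<dots> = - (\<Sum>l\<in>UNIV. Jh$k$l *\<^sub>R Vh l)"
      unfolding Vh_def vsum_mat JhA ..
    finally show ?thesis .
  qed
  have "2 * (\<Sum>L\<in>UNIV. \<Sum>S\<in>UNIV. snd (gamma_inv Jh)$L$S * Cf (matrix_inv gx) a b (Vh (Inl L)) (Vh (Inl S)))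
      - 1/2 * gx$a$b * (\<Sum>L\<in>UNIV. \<Sum>S\<in>UNIV. snd (gamma_inv Jh)$L$S * FFf (matrix_inv gx) (Vh (Inl L)) (Vh (Inl S)))
    = (\<Sum>k\<in>UNIV. \<Sum>l\<in>UNIV. (symp_mat ** Jh)$k$l * Cf (matrix_inv gx) a b (Vh k) (Vh l))"
    by (rule field_K[OF gs gd s P2(1) P2(2) P2(3) P2(4) Vha hch])
  also have "\<dots> = (\<Sum>m\<in>UNIV. \<Sum>n\<in>UNIV. (transpose A ** (symp_mat ** Jh) ** A)$m$n * Cf (matrix_inv gx) a b (V m) (V n))"
    unfolding Vh_def by (rule bil_transfer)
  also have "transpose A ** (symp_mat ** Jh) ** A = symp_mat ** J"
  proof -
    have "transpose A ** (symp_mat ** Jh) ** A = transpose A ** symp_mat ** (Jh ** A)"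
      by (simp add: matrix_mul_assoc)
    also have "\<dots> = (transpose A ** symp_mat ** A) ** J" by (simp add: JhA matrix_mul_assoc)
    finally show ?thesis using AOA by simp
  qed
  also have "(\<Sum>m\<in>UNIV. \<Sum>n\<in>UNIV. (symp_mat ** J)$m$n * Cf (matrix_inv gx) a b (V m) (V n))
     = 2 * (\<Sum>L\<in>UNIV. \<Sum>S\<in>UNIV. snd (gamma_inv J)$L$S * Cf (matrix_inv gx) a b (V (Inl L)) (V (Inl S)))
      - 1/2 * gx$a$b * (\<Sum>L\<in>UNIV. \<Sum>S\<in>UNIV. snd (gamma_inv J)$L$S * FFf (matrix_inv gx) (V (Inl L)) (V (Inl S)))"
    by (rule field_K[OF gs gd s P1(1) P1(2) P1(3) P1(4) Va hc, symmetric])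
  finally show ?thesis unfolding Vh_def Jh_def .
qed

lemma smooth_diff_at:
  assumes "smooth_on S f" "open S" "x \<in> S"
  shows "f differentiable at x"
proof -
  have "Ck_on (Suc 0) S f" using assms(1) unfolding smooth_on_def by blast
  then have "f differentiable_on S" by simp
  then show ?thesis using assms(2,3) differentiable_on_eq_differentiable_at by blast
qed

lemma quad_change:
  fixes Gk :: "real^'s::finite^'s" and D :: "'s \<Rightarrow> real^'s" and w z :: "real^'s"
  shows "(\<Sum>i\<in>UNIV. \<Sum>j\<in>UNIV. (\<Sum>k\<in>UNIV. \<Sum>l\<in>UNIV. Gk$k$l * D i $ k * D j $ l) * w$i * z$j)
       = (\<Sum>k\<in>UNIV. \<Sum>l\<in>UNIV. Gk$k$l * (\<Sum>i\<in>UNIV. w$i * D i $ k) * (\<Sum>j\<in>UNIV. z$j * D j $ l))"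
proof -
  have "(\<Sum>i\<in>UNIV. \<Sum>j\<in>UNIV. (\<Sum>k\<in>UNIV. \<Sum>l\<in>UNIV. Gk$k$l * D i $ k * D j $ l) * w$i * z$j)
     = (\<Sum>i\<in>UNIV. \<Sum>j\<in>UNIV. \<Sum>k\<in>UNIV. \<Sum>l\<in>UNIV. Gk$k$l * (w$i * D i $ k) * (z$j * D j $ l))"
    by (simp add: sum_distrib_left sum_distrib_right mult_ac)
  also have "\<dots> = (\<Sum>k\<in>UNIV. \<Sum>l\<in>UNIV. \<Sum>i\<in>UNIV. \<Sum>j\<in>UNIV. Gk$k$l * (w$i * D i $ k) * (z$j * D j $ l))"
    by (rule swap22)
  also have "\<dots> = (\<Sum>k\<in>UNIV. \<Sum>l\<in>UNIV. Gk$k$l * (\<Sum>i\<in>UNIV. w$i * D i $ k) * (\<Sum>j\<in>UNIV. z$j * D j $ l))"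
    by (simp add: sum_distrib_left sum_distrib_right mult_ac)
  finally show ?thesis .
qed

lemma kin_swap:
  fixes M :: "real^'s::finite^'s" and gi :: "real^'n::finite^'n" and P :: "'n \<Rightarrow> real^'s"
  shows "(\<Sum>i\<in>UNIV. \<Sum>j\<in>UNIV. M$i$j * (\<Sum>c\<in>UNIV. \<Sum>d\<in>UNIV. gi$c$d * P c $ i * P d $ j))
     = (\<Sum>c\<in>UNIV. \<Sum>d\<in>UNIV. gi$c$d * (\<Sum>i\<in>UNIV. \<Sum>j\<in>UNIV. M$i$j * P c $ i * P d $ j))"
proof -
  have "(\<Sum>i\<in>UNIV. \<Sum>j\<in>UNIV. M$i$j * (\<Sum>c\<in>UNIV. \<Sum>d\<in>UNIV. gi$c$d * P c $ i * P d $ j))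
     = (\<Sum>i\<in>UNIV. \<Sum>j\<in>UNIV. \<Sum>c\<in>UNIV. \<Sum>d\<in>UNIV. gi$c$d * (M$i$j * P c $ i * P d $ j))"
    by (simp add: sum_distrib_left mult_ac)
  also have "\<dots> = (\<Sum>c\<in>UNIV. \<Sum>d\<in>UNIV. \<Sum>i\<in>UNIV. \<Sum>j\<in>UNIV. gi$c$d * (M$i$j * P c $ i * P d $ j))"
    by (rule swap22)
  also have "\<dots> = (\<Sum>c\<in>UNIV. \<Sum>d\<in>UNIV. gi$c$d * (\<Sum>i\<in>UNIV. \<Sum>j\<in>UNIV. M$i$j * P c $ i * P d $ j))"
    by (simp add: sum_distrib_left)
  finally show ?thesis .
qed

lemma scalar_inv:
  fixes V :: "(real^'s::finite) set" and f :: "real^'s \<Rightarrow> real^'s" and \<phi> :: "real^4 \<Rightarrow> real^'s"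
    and G :: "real^'s \<Rightarrow> real^'s^'s"
  assumes V: "open V" and fd: "orient_diffeo V oV f" and U: "open U" and x: "x \<in> U"
    and ph: "smooth_on U \<phi>" and phV: "\<phi> ` U \<subseteq> V"
  shows "(\<Sum>i\<in>UNIV. \<Sum>j\<in>UNIV. push_metric V f G ((f \<circ> \<phi>) x) $i$j *
            frechet_derivative (f \<circ> \<phi>) (at x) (axis p 1) $ i * frechet_derivative (f \<circ> \<phi>) (at x) (axis q 1) $ j)
       = (\<Sum>i\<in>UNIV. \<Sum>j\<in>UNIV. G (\<phi> x) $i$j *
            frechet_derivative \<phi> (at x) (axis p 1) $ i * frechet_derivative \<phi> (at x) (axis q 1) $ j)"
proof -
  define y where "y = \<phi> x"
  define h where "h = inv_into V f"
  have yV: "y \<in> V" using phV x unfolding y_def by blast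
  have bij: "bij_betw f V V" and fs: "smooth_on V f" and hs: "smooth_on V h"
    using fd unfolding orient_diffeo_def h_def by auto
  have fyV: "f y \<in> V" using bij yV bij_betwE by blast
  have hf: "h (f z) = z" if "z \<in> V" for z
    unfolding h_def using bij that bij_betw_imp_inj_on inv_into_f_f by metis
  have dph: "\<phi> differentiable at x" using smooth_diff_at[OF ph U x] .
  have df: "f differentiable at y" using smooth_diff_at[OF fs V yV] .
  have dh: "h differentiable at (f y)" using smooth_diff_at[OF hs V fyV] .
  define Df where "Df = frechet_derivative f (at y)"
  define Dh where "Dh = frechet_derivative h (at (f y))"
  have Dfp: "(f has_derivative Df) (at y)" using df frechet_derivative_works unfolding Df_def by blast
  have Dhp: "(h has_derivative Dh) (at (f y))" using dh frechet_derivative_works unfolding Dh_def by blast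
  have chain: "frechet_derivative (f \<circ> \<phi>) (at x) = Df \<circ> frechet_derivative \<phi> (at x)"
    unfolding Df_def y_def by (rule frechet_derivative_compose[OF dph df[unfolded y_def]])
  have hfD1: "((h \<circ> f) has_derivative (Dh \<circ> Df)) (at y)" by (rule diff_chain_at[OF Dfp Dhp])
  have hfD2: "((h \<circ> f) has_derivative id) (at y)"
    by (rule has_derivative_transform_within_open[OF has_derivative_id V yV]) (simp add: hf)
  have DhDf: "Dh (Df w) = w" for w
    using has_derivative_unique[OF hfD1 hfD2] by (metis comp_apply id_apply)
  have lin: "linear Dh" using Dhp has_derivative_linear by blast
  have Dexp: "(Dh w) $ k = (\<Sum>i\<in>UNIV. w$i * Dh (axis i 1) $ k)" for w k
  proof -
    have "Dh w = Dh (\<Sum>i\<in>UNIV. w$i *\<^sub>R axis i 1)" using basis_expansion[of w] by (simp add: scalar_mult_eq_scaleR)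
    also have "\<dots> = (\<Sum>i\<in>UNIV. w$i *\<^sub>R Dh (axis i 1))"
      by (simp add: linear_sum[OF lin] linear_scale[OF lin])
    finally show ?thesis by (simp add: sum_component)
  qed
  have PM: "push_metric V f G (f y) = (\<chi> i j. \<Sum>k\<in>UNIV. \<Sum>l\<in>UNIV. G y $ k $ l * Dh (axis i 1) $ k * Dh (axis j 1) $ l)"
    unfolding push_metric_def Let_def h_def[symmetric] Dh_def[symmetric] hf[OF yV] ..
  show ?thesis
    unfolding comp_apply[of f \<phi> x] y_def[symmetric] PM chain
    by (simp add: quad_change Dexp[symmetric] DhDf)
qed

lemma em_split:
  "energy_momentum G' J' g \<psi> W x $ a $ b =
     (\<Sum>i\<in>UNIV. \<Sum>j\<in>UNIV. G' (\<psi> x) $i$j * frechet_derivative \<psi> (at x) (axis a 1) $ i * frechet_derivative \<psi> (at x) (axis b 1) $ j)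
     - 1/2 * g x $a$b * (\<Sum>c\<in>UNIV. \<Sum>d\<in>UNIV. matrix_inv (g x) $c$d *
          (\<Sum>i\<in>UNIV. \<Sum>j\<in>UNIV. G' (\<psi> x) $i$j * frechet_derivative \<psi> (at x) (axis c 1) $ i * frechet_derivative \<psi> (at x) (axis d 1) $ j))
     + (2 * (\<Sum>L\<in>UNIV. \<Sum>S\<in>UNIV. snd (gamma_inv (J' (\<psi> x)))$L$S * Cf (matrix_inv (g x)) a b (W x $ Inl L) (W x $ Inl S))
        - 1/2 * g x $a$b * (\<Sum>L\<in>UNIV. \<Sum>S\<in>UNIV. snd (gamma_inv (J' (\<psi> x)))$L$S * FFf (matrix_inv (g x)) (W x $ Inl L) (W x $ Inl S)))"
  unfolding energy_momentum_def Let_def Cf_def FFf_def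
  by (simp only: vec_lambda_beta kin_swap)

lemma det_minkowski: "det minkowski = -1"
  by (simp add: det_4 minkowski_def)

lemma lorentz_det:
  assumes "lorentzian_on U g" "x \<in> U"
  shows "transpose (g x) = g x" "det (g x) < 0"
proof -
  obtain P where P: "invertible P" "transpose P ** g x ** P = minkowski" and gs: "transpose (g x) = g x"
    using assms unfolding lorentzian_on_def by blast
  show "transpose (g x) = g x" by (rule gs)
  have "det (transpose P ** g x ** P) = -1" using P(2) det_minkowski by simp
  then have "det P * det P * det (g x) = -1" by (simp add: det_mul det_transpose mult_ac)
  moreover have "det P * det P \<ge> 0" by simp
  ultimately show "det (g x) < 0"
  proof -
    assume h1: "det P * det P * det (g x) = -1" and h2: "det P * det P \<ge> 0"
    show ?thesis
    proof (rule ccontr)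
      assume "\<not> det (g x) < 0"
      then have "det (g x) \<ge> 0" by simp
      then have "det P * det P * det (g x) \<ge> 0" using h2 by (rule mult_nonneg_nonneg[rotated])
      then show False using h1 by simp
    qed
  qed
qed

theorem lemma2p16:
  fixes U :: "(real^4) set" and oU :: "real^4 \<Rightarrow> real"
    and V :: "(real^'s::finite) set" and oV :: "real^'s \<Rightarrow> real"
    and G :: "real^'s \<Rightarrow> real^'s^'s"
    and J :: "real^'s \<Rightarrow> real^('v::finite + 'v)^('v + 'v)"
    and f :: "real^'s \<Rightarrow> real^'s" and A :: "real^('v + 'v)^('v + 'v)"
    and g :: "real^4 \<Rightarrow> real^4^4" and \<phi> :: "real^4 \<Rightarrow> real^'s"
    and \<V> :: "real^4 \<Rightarrow> real^4^4^('v + 'v)"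
  assumes "contractible U" and "open U" and "compact (closure U)" and "U \<noteq> {}"
    and "orientation_on U oU"
    and "open V" and "orientation_on V oV"
    and "riemannian_on V G" and "taming_map V J"
    and "orient_diffeo V oV f" and "A \<in> Sp"
    and "(g, \<phi>, \<V>) \<in> Conf U oU V G J"
  shows "\<forall>x\<in>U. energy_momentum (push_metric V f G) (J_transf V f A J)
                 g (f \<circ> \<phi>) (\<lambda>x. \<chi> k. \<Sum>l\<in>UNIV. A $ k $ l *\<^sub>R \<V> x $ l) x
             = energy_momentum G J g \<phi> \<V> x"
proof (intro ballI)
  fix x assume x: "x \<in> U"
  have lor: "lorentzian_on U g" and ph: "smooth_on U \<phi>" and phV: "\<phi> ` U \<subseteq> V"
    and Va: "\<And>k. transpose (\<V> x $ k) = - (\<V> x $ k)"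
    and hc: "\<And>k. hodge (g x) (oU x) (\<V> x $ k) = - (\<Sum>l\<in>UNIV. J (\<phi> x) $ k $ l *\<^sub>R \<V> x $ l)"
    using assms(12) x unfolding Conf_def by auto
  have gs: "transpose (g x) = g x" and gd: "det (g x) < 0" using lorentz_det[OF lor x] by auto
  have s: "oU x = 1 \<or> oU x = -1" using assms(5) x unfolding orientation_on_def by blast
  have phx: "\<phi> x \<in> V" using phV x by blast
  have Jt: "tame_cs (J (\<phi> x))" using assms(9) phx unfolding taming_map_def by blast
  have bij: "bij_betw f V V" using assms(10) unfolding orient_diffeo_def by blast
  have hf: "inv_into V f (f (\<phi> x)) = \<phi> x"
    using bij phx bij_betw_imp_inj_on inv_into_f_f by metis
  have Jtr: "J_transf V f A J ((f \<circ> \<phi>) x) = A ** J (\<phi> x) ** matrix_inv A"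
    unfolding J_transf_def comp_apply hf ..
  have FI: "2 * (\<Sum>L\<in>UNIV. \<Sum>S\<in>UNIV. snd (gamma_inv (A ** J (\<phi> x) ** matrix_inv A))$L$S *
              Cf (matrix_inv (g x)) a b ((\<Sum>l\<in>UNIV. A$Inl L$l *\<^sub>R \<V> x $ l)) ((\<Sum>l\<in>UNIV. A$Inl S$l *\<^sub>R \<V> x $ l)))
      - 1/2 * g x$a$b * (\<Sum>L\<in>UNIV. \<Sum>S\<in>UNIV. snd (gamma_inv (A ** J (\<phi> x) ** matrix_inv A))$L$S *
              FFf (matrix_inv (g x)) ((\<Sum>l\<in>UNIV. A$Inl L$l *\<^sub>R \<V> x $ l)) ((\<Sum>l\<in>UNIV. A$Inl S$l *\<^sub>R \<V> x $ l)))
    = 2 * (\<Sum>L\<in>UNIV. \<Sum>S\<in>UNIV. snd (gamma_inv (J (\<phi> x)))$L$S * Cf (matrix_inv (g x)) a b (\<V> x $ Inl L) (\<V> x $ Inl S))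
      - 1/2 * g x$a$b * (\<Sum>L\<in>UNIV. \<Sum>S\<in>UNIV. snd (gamma_inv (J (\<phi> x)))$L$S * FFf (matrix_inv (g x)) (\<V> x $ Inl L) (\<V> x $ Inl S))"
    for a b
    by (rule field_inv[OF gs gd s assms(11) Jt, of "\<lambda>l. \<V> x $ l", OF Va hc])
  have SC: "(\<Sum>i\<in>UNIV. \<Sum>j\<in>UNIV. push_metric V f G ((f \<circ> \<phi>) x) $i$j *
            frechet_derivative (f \<circ> \<phi>) (at x) (axis p 1) $ i * frechet_derivative (f \<circ> \<phi>) (at x) (axis q 1) $ j)
       = (\<Sum>i\<in>UNIV. \<Sum>j\<in>UNIV. G (\<phi> x) $i$j *
            frechet_derivative \<phi> (at x) (axis p 1) $ i * frechet_derivative \<phi> (at x) (axis q 1) $ j)" for p q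
    by (rule scalar_inv[OF assms(6) assms(10) assms(2) x ph phV])
  show "energy_momentum (push_metric V f G) (J_transf V f A J)
                 g (f \<circ> \<phi>) (\<lambda>x. \<chi> k. \<Sum>l\<in>UNIV. A $ k $ l *\<^sub>R \<V> x $ l) x
             = energy_momentum G J g \<phi> \<V> x"
    unfolding vec_eq_iff
  proof (intro allI)
    fix a b
    show "energy_momentum (push_metric V f G) (J_transf V f A J)
                 g (f \<circ> \<phi>) (\<lambda>x. \<chi> k. \<Sum>l\<in>UNIV. A $ k $ l *\<^sub>R \<V> x $ l) x $ a $ b
             = energy_momentum G J g \<phi> \<V> x $ a $ b"
      unfolding em_split SC Jtr vec_lambda_beta FI ..
  qed
qed

end
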